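(* For every $s>1/4$ there is $C$ depending only on $s$ such that for every finite linear combination $w$ of the functions $w_{ij}$, $$\|Tr(w)\|_{X^{s-1/4}(I)}\le C\|w\|_{X^s(\Omega)},$$ where $Tr(w)(x_1)=w(x_1,0)$. Consequently $Tr$ extends uniquely to a bounded operator $X^s(\Omega)\to X^{s-1/4}(I)$.
   Context: $I_+=(0,1)$, $I=(-1,1)$, $\Omega=I\times I_+$. $u_i(x_1)=c_{1i}\cos(i\pi(x_1+1)/2)$, $v_j(x_2)=c_{2j}\cos(j\pi x_2)$, $w_{ij}=u_i(x_1)v_j(x_2)$ ($i,j\ge0$), $c_{10}=1/\sqrt2$, $c_{1i}=1$ ($i\ge1$), $c_{20}=1$, $c_{2j}=\sqrt2$ ($j\ge1$). $\lambda^I_i=-(i\pi/2)^2$, $\lambda^\Omega_{ij}=-(i\pi/2)^2-(j\pi)^2$. For $s\ge0$: $X^s(I)=\{u\in L_2(I):\|u\|^2_{X^s(I)}=\sum_i(1-\lambda^I_i)^{2s}(u|u_i)_{L_2}^2<\infty\}$, $X^s(\Omega)=\{w\in L_2(\Omega):\|w\|^2_{X^s(\Omega)}=\sum_{i,j}(1-\lambda^\Omega_{ij})^{2s}(w|w_{ij})_{L_2}^2<\infty\}$. *)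

theory Defs
  imports "HOL-Analysis.Analysis"
begin

definition I_int :: "real set" where "I_int = {-1<..<1}"
definition Omega :: "(real \<times> real) set" where "Omega = {-1<..<1} \<times> {0<..<1}"

definition c1 :: "nat \<Rightarrow> real" where "c1 i = (if i = 0 then 1 / sqrt 2 else 1)"
definition c2 :: "nat \<Rightarrow> real" where "c2 j = (if j = 0 then 1 else sqrt 2)"

definition u_fun :: "nat \<Rightarrow> real \<Rightarrow> real" where
  "u_fun i x = c1 i * cos (real i * pi * (x + 1) / 2)"
definition v_fun :: "nat \<Rightarrow> real \<Rightarrow> real" where
  "v_fun j y = c2 j * cos (real j * pi * y)"
definition w_fun :: "nat \<Rightarrow> nat \<Rightarrow> real \<times> real \<Rightarrow> real" where
  "w_fun i j p = u_fun i (fst p) * v_fun j (snd p)"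

definition lamI :: "nat \<Rightarrow> real" where "lamI i = - ((real i * pi / 2) ^ 2)"
definition lamO :: "nat \<Rightarrow> nat \<Rightarrow> real" where
  "lamO i j = - ((real i * pi / 2) ^ 2) - (real j * pi) ^ 2"

definition ipI :: "(real \<Rightarrow> real) \<Rightarrow> (real \<Rightarrow> real) \<Rightarrow> real" where
  "ipI f g = (LINT x:I_int|lborel. f x * g x)"
definition ipO :: "(real \<times> real \<Rightarrow> real) \<Rightarrow> (real \<times> real \<Rightarrow> real) \<Rightarrow> real" where
  "ipO f g = (LINT p:Omega|lborel. f p * g p)"

definition L2I :: "(real \<Rightarrow> real) \<Rightarrow> bool" where
  "L2I f \<longleftrightarrow> set_borel_measurable lborel I_int f \<and> set_integrable lborel I_int (\<lambda>x. (f x)\<^sup>2)"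
definition L2O :: "(real \<times> real \<Rightarrow> real) \<Rightarrow> bool" where
  "L2O f \<longleftrightarrow> set_borel_measurable lborel Omega f \<and> set_integrable lborel Omega (\<lambda>p. (f p)\<^sup>2)"

definition XsI :: "real \<Rightarrow> (real \<Rightarrow> real) set" where
  "XsI s = {f. L2I f \<and> summable (\<lambda>i. (1 - lamI i) powr (2 * s) * (ipI f (u_fun i))\<^sup>2)}"
definition normI :: "real \<Rightarrow> (real \<Rightarrow> real) \<Rightarrow> real" where
  "normI s f = sqrt (\<Sum>i. (1 - lamI i) powr (2 * s) * (ipI f (u_fun i))\<^sup>2)"

definition XsO :: "real \<Rightarrow> (real \<times> real \<Rightarrow> real) set" where
  "XsO s = {f. L2O f \<and>
     (\<lambda>(i,j). (1 - lamO i j) powr (2 * s) * (ipO f (w_fun i j))\<^sup>2) summable_on (UNIV :: (nat \<times> nat) set)}"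
definition normO :: "real \<Rightarrow> (real \<times> real \<Rightarrow> real) \<Rightarrow> real" where
  "normO s f = sqrt (\<Sum>\<^sub>\<infinity>(i,j)\<in>(UNIV :: (nat \<times> nat) set). (1 - lamO i j) powr (2 * s) * (ipO f (w_fun i j))\<^sup>2)"

definition finite_comb :: "(real \<times> real \<Rightarrow> real) \<Rightarrow> bool" where
  "finite_comb w \<longleftrightarrow> (\<exists>F a. finite F \<and> w = (\<lambda>p. \<Sum>(i,j)\<in>F. a i j * w_fun i j p))"

definition Tr :: "(real \<times> real \<Rightarrow> real) \<Rightarrow> real \<Rightarrow> real" where
  "Tr w x1 = w (x1, 0)"

text \<open>T is a bounded linear operator X^s(Omega) -> X^(s-1/4)(I) extending Tr from finite
  combinations; equalities of L2 elements are understood almost everywhere.\<close>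
definition trace_ext :: "real \<Rightarrow> ((real \<times> real \<Rightarrow> real) \<Rightarrow> real \<Rightarrow> real) \<Rightarrow> bool" where
  "trace_ext s T \<longleftrightarrow>
     (\<forall>w\<in>XsO s. T w \<in> XsI (s - 1/4)) \<and>
     (\<forall>w\<in>XsO s. \<forall>v\<in>XsO s. \<forall>a b::real.
        AE x in lborel. x \<in> I_int \<longrightarrow> T (\<lambda>p. a * w p + b * v p) x = a * T w x + b * T v x) \<and>
     (\<exists>C. \<forall>w\<in>XsO s. normI (s - 1/4) (T w) \<le> C * normO s w) \<and>
     (\<forall>w. finite_comb w \<longrightarrow> (AE x in lborel. x \<in> I_int \<longrightarrow> T w x = Tr w x))"

end

theory Submission
  imports Defs
begin


lemma ipI_LBINT: "ipI f g = (LBINT x=ereal(-1)..ereal 1. f x * g x)"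
  by (simp add: ipI_def interval_lebesgue_integral_def I_int_def)

lemma cosint_gen:
  fixes a b c :: real
  assumes "a \<le> b" "c \<noteq> 0" "sin (c * b) = 0" "sin (c * a) = 0"
  shows "(LBINT x=ereal a..ereal b. cos (c * x)) = 0"
proof -
  have "(LBINT x=ereal a..ereal b. cos (c * x)) = sin (c*b)/c - sin (c*a)/c"
  proof (rule interval_integral_FTC_finite)
    show "continuous_on {min a b..max a b} (\<lambda>x. cos (c * x))" by (intro continuous_intros)
    fix x assume "min a b \<le> x" "x \<le> max a b"
    have "((\<lambda>x. sin (c*x)/c) has_real_derivative cos (c*x)) (at x)"
      using assms(2) by (auto intro!: derivative_eq_intros)
    then show "((\<lambda>x. sin (c*x)/c) has_vector_derivative cos (c * x)) (at x within {min a b..max a b})"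
      by (simp add: has_real_derivative_iff_has_vector_derivative has_vector_derivative_at_within)
  qed
  then show ?thesis using assms by simp
qed

lemma const_int: "a \<le> b \<Longrightarrow> (LBINT x=ereal a..ereal b. (1::real)) = b - a"
  by (subst interval_integral_FTC_finite[where F="\<lambda>x. x"]) (auto intro!: derivative_eq_intros continuous_intros)

lemma cosint_shift:
  fixes a b c d :: real
  assumes "a \<le> b" "c \<noteq> 0" "sin (c * (b+d)) = 0" "sin (c * (a+d)) = 0"
  shows "(LBINT x=ereal a..ereal b. cos (c * (x+d))) = 0"
proof -
  have "(LBINT x=ereal a..ereal b. cos (c * (x+d))) = sin (c*(b+d))/c - sin (c*(a+d))/c"
  proof (rule interval_integral_FTC_finite)
    show "continuous_on {min a b..max a b} (\<lambda>x. cos (c * (x+d)))" by (intro continuous_intros)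
    fix x assume "min a b \<le> x" "x \<le> max a b"
    have "((\<lambda>x. sin (c*(x+d))/c) has_real_derivative cos (c*(x+d))) (at x)"
      using assms(2) by (auto intro!: derivative_eq_intros)
    then show "((\<lambda>x. sin (c*(x+d))/c) has_vector_derivative cos (c * (x+d))) (at x within {min a b..max a b})"
      by (simp add: has_real_derivative_iff_has_vector_derivative has_vector_derivative_at_within)
  qed
  then show ?thesis using assms by simp
qed

lemma cosI: "(LBINT x=ereal (-1)..ereal 1. cos (real m * pi * (x+1)/2)) = (if m = 0 then 2 else 0)"
proof (cases "m = 0")
  case True then show ?thesis using const_int[of "-1" 1] by simp
next
  case False
  have e: "\<And>x. cos (real m * pi * (x+1)/2) = cos ((real m * pi/2) * (x+1))"
    by (simp add: field_simps)
  have s1: "sin ((real m * pi/2) * (1+1)) = 0"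
  proof -
    have "(real m * pi/2) * (1+1) = real m * pi" by simp
    then show ?thesis by (simp only: sin_npi)
  qed
  have "(LBINT x=ereal (-1)..ereal 1. cos ((real m * pi/2) * (x+1))) = 0"
    by (rule cosint_shift) (use False s1 in auto)
  then show ?thesis using False by (simp only: e) simp
qed

lemma cosJ: "(LBINT x=ereal 0..ereal 1. cos (real m * pi * x)) = (if m = 0 then 1 else 0)"
proof (cases "m = 0")
  case True then show ?thesis using const_int[of 0 1] by simp
next
  case False
  have "(LBINT x=ereal 0..ereal 1. cos ((real m * pi) * x)) = 0"
    by (rule cosint_gen) (use False in \<open>auto simp: sin_npi\<close>)
  then show ?thesis using False by (simp add: mult.assoc)
qed

lemma cos_prod_nat:
  fixes i k :: nat and t :: real
  shows "cos (real i * t) * cos (real k * t) =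
     (cos (real (if k \<le> i then i - k else k - i) * t) + cos (real (i + k) * t)) / 2"
proof -
  have "cos (real i * t) * cos (real k * t) = (cos (real i * t - real k * t) + cos (real i * t + real k * t)) / 2"
    by (simp add: cos_times_cos)
  moreover have "cos (real i * t - real k * t) = cos (real (if k \<le> i then i - k else k - i) * t)"
  proof (cases "k \<le> i")
    case True then show ?thesis by (simp add: of_nat_diff left_diff_distrib)
  next
    case False
    then have "real i * t - real k * t = - (real (k - i) * t)" by (simp add: of_nat_diff left_diff_distrib)
    then show ?thesis using False by (simp only: cos_minus) simp
  qed
  moreover have "real i * t + real k * t = real (i + k) * t" by (simp add: distrib_right)
  ultimately show ?thesis by simp
qed

lemma u_prod: "u_fun i x * u_fun k x = c1 i * c1 k / 2 *
   (cos (real (if k \<le> i then i - k else k - i) * pi * (x+1)/2) + cos (real (i + k) * pi * (x+1)/2))"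
proof -
  have "\<And>m::nat. real m * pi * (x+1)/2 = real m * (pi * (x+1)/2)" by simp
  then show ?thesis unfolding u_fun_def using cos_prod_nat[of i "pi*(x+1)/2" k] by (simp add: field_simps)
qed

lemma v_prod: "v_fun j y * v_fun l y = c2 j * c2 l / 2 *
   (cos (real (if l \<le> j then j - l else l - j) * pi * y) + cos (real (j + l) * pi * y))"
proof -
  have "\<And>m::nat. real m * pi * y = real m * (pi * y)" by simp
  then show ?thesis unfolding v_fun_def using cos_prod_nat[of j "pi*y" l] by (simp add: field_simps)
qed

lemma ortho_u: "ipI (u_fun i) (u_fun k) = (if i = k then 1 else 0)"
proof -
  define d where "d = (if k \<le> i then i - k else k - i)"
  have "ipI (u_fun i) (u_fun k) = (LBINT x=ereal(-1)..ereal 1. c1 i * c1 k / 2 *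
     (cos (real d * pi * (x+1)/2) + cos (real (i + k) * pi * (x+1)/2)))"
    unfolding ipI_LBINT u_prod d_def ..
  also have "\<dots> = c1 i * c1 k / 2 * ((LBINT x=ereal(-1)..ereal 1. cos (real d * pi * (x+1)/2)) +
       (LBINT x=ereal(-1)..ereal 1. cos (real (i + k) * pi * (x+1)/2)))"
    by (subst interval_lebesgue_integral_mult_right, subst interval_lebesgue_integral_add(2))
       (auto intro!: interval_integrable_isCont continuous_intros)
  also have "\<dots> = (if i = k then 1 else 0)"
    unfolding cosI by (auto simp: d_def c1_def)
  finally show ?thesis .
qed

lemma ortho_v: "(LBINT y=ereal 0..ereal 1. v_fun j y * v_fun l y) = (if j = l then 1 else 0)"
proof -
  define d where "d = (if l \<le> j then j - l else l - j)"
  have "(LBINT y=ereal 0..ereal 1. v_fun j y * v_fun l y) = (LBINT x=ereal 0..ereal 1. c2 j * c2 l / 2 *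
     (cos (real d * pi * x) + cos (real (j + l) * pi * x)))"
    unfolding v_prod d_def ..
  also have "\<dots> = c2 j * c2 l / 2 * ((LBINT x=ereal 0..ereal 1. cos (real d * pi * x)) +
       (LBINT x=ereal 0..ereal 1. cos (real (j + l) * pi * x)))"
    by (subst interval_lebesgue_integral_mult_right, subst interval_lebesgue_integral_add(2))
       (auto intro!: interval_integrable_isCont continuous_intros)
  also have "\<dots> = (if j = l then 1 else 0)"
    unfolding cosJ by (auto simp: d_def c2_def)
  finally show ?thesis .
qed


lemma prod_integral:
  fixes F G :: "real \<Rightarrow> real"
  assumes F: "integrable lborel F" and G: "integrable lborel G"
  shows "integrable lborel (\<lambda>p::real\<times>real. F (fst p) * G (snd p))"
    and "integral\<^sup>L lborel (\<lambda>p::real\<times>real. F (fst p) * G (snd p)) = integral\<^sup>L lborel F * integral\<^sup>L lborel G"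
proof -
  have [measurable]: "F \<in> borel_measurable borel" "G \<in> borel_measurable borel" using F G by auto
  have int: "integrable (lborel \<Otimes>\<^sub>M lborel) (\<lambda>p::real\<times>real. F (fst p) * G (snd p))"
  proof (rule lborel_pair.Fubini_integrable)
    show "integrable lborel (\<lambda>x. LINT y|lborel. norm (F (fst (x, y)) * G (snd (x, y))))"
      using F G by (simp add: abs_mult)
    show "AE x in lborel. integrable lborel (\<lambda>y. F (fst (x, y)) * G (snd (x, y)))"
      using G by simp
  qed simp
  then show "integrable lborel (\<lambda>p::real\<times>real. F (fst p) * G (snd p))" by (simp add: lborel_prod)
  have "integral\<^sup>L (lborel \<Otimes>\<^sub>M lborel) (\<lambda>p::real\<times>real. F (fst p) * G (snd p)) = 
      (LINT x|lborel. LINT y|lborel. F (fst (x,y)) * G (snd (x,y)))"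
    using lborel_pair.integral_fst'[OF int] by simp
  also have "\<dots> = integral\<^sup>L lborel F * integral\<^sup>L lborel G" by simp
  finally show "integral\<^sup>L lborel (\<lambda>p::real\<times>real. F (fst p) * G (snd p)) = integral\<^sup>L lborel F * integral\<^sup>L lborel G"
    by (simp add: lborel_prod)
qed

lemma indicator_Omega: "indicator Omega p = (indicator {-1<..<1} (fst p) * indicator {0<..<1} (snd p) :: real)"
  by (cases p) (auto simp: Omega_def indicator_def)

lemma ipO_sep:
  fixes f g :: "real \<Rightarrow> real"
  assumes "continuous_on UNIV f" "continuous_on UNIV g"
  shows "set_integrable lborel Omega (\<lambda>p. f (fst p) * g (snd p))"
    and "(LINT p:Omega|lborel. f (fst p) * g (snd p)) = (LBINT x=ereal(-1)..ereal 1. f x) * (LBINT y=ereal 0..ereal 1. g y)"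
proof -
  have Fi: "integrable lborel (\<lambda>x. indicator {-1<..<1} x * f x)"
  proof -
    have "interval_lebesgue_integrable lborel (ereal (-1)) (ereal 1) f"
      by (rule interval_integrable_isCont) (use assms(1) continuous_on_eq_continuous_at in auto)
    then show ?thesis by (simp add: interval_lebesgue_integrable_def set_integrable_def)
  qed
  have Gi: "integrable lborel (\<lambda>x. indicator {0<..<1} x * g x)"
  proof -
    have "interval_lebesgue_integrable lborel (ereal 0) (ereal 1) g"
      by (rule interval_integrable_isCont) (use assms(2) continuous_on_eq_continuous_at in auto)
    then show ?thesis by (simp add: interval_lebesgue_integrable_def set_integrable_def)
  qed
  have eq: "(\<lambda>p. indicator Omega p *\<^sub>R (f (fst p) * g (snd p))) = 
     (\<lambda>p. (indicator {-1<..<1} (fst p) * f (fst p)) * (indicator {0<..<1} (snd p) * g (snd p)))"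
    by (auto simp: indicator_Omega)
  show "set_integrable lborel Omega (\<lambda>p. f (fst p) * g (snd p))"
    unfolding set_integrable_def eq by (rule prod_integral(1)[OF Fi Gi])
  show "(LINT p:Omega|lborel. f (fst p) * g (snd p)) = (LBINT x=ereal(-1)..ereal 1. f x) * (LBINT y=ereal 0..ereal 1. g y)"
    unfolding set_lebesgue_integral_def eq prod_integral(2)[OF Fi Gi]
    by (simp add: interval_lebesgue_integral_def set_lebesgue_integral_def)
qed

lemma cont_u: "continuous_on UNIV (u_fun i)" unfolding u_fun_def by (auto intro!: continuous_intros)
lemma cont_v: "continuous_on UNIV (v_fun i)" unfolding v_fun_def by (intro continuous_intros)

lemma ortho_w: "ipO (w_fun i j) (w_fun k l) = (if i = k \<and> j = l then 1 else 0)"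
proof -
  have "ipO (w_fun i j) (w_fun k l) = (LINT p:Omega|lborel. (u_fun i (fst p) * u_fun k (fst p)) * (v_fun j (snd p) * v_fun l (snd p)))"
    unfolding ipO_def w_fun_def by (simp add: ac_simps)
  also have "\<dots> = ipI (u_fun i) (u_fun k) * (LBINT y=ereal 0..ereal 1. v_fun j y * v_fun l y)"
    unfolding ipI_LBINT by (rule ipO_sep(2)) (intro continuous_intros cont_u cont_v)+
  finally show ?thesis by (simp add: ortho_u ortho_v)
qed


lemma tele_step:
  fixes q x :: real
  assumes q: "q > 0" and x: "x \<ge> 2"
  shows "x powr (-(q+1)) \<le> ((x-1) powr (-q) - x powr (-q)) / q"
proof -
  have "\<exists>z. x - 1 < z \<and> z < x \<and> (x powr (-q) - (x-1) powr (-q) = (x - (x-1)) * (-q * z powr (-q-1)))"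
  proof (rule MVT2)
    fix t assume "x - 1 \<le> t" "t \<le> x"
    then have "t > 0" using x by simp
    then show "DERIV (\<lambda>t. t powr (-q)) t :> -q * t powr (-q-1)"
      by (auto intro!: derivative_eq_intros simp: field_simps)
  qed simp
  then obtain z where z: "x - 1 < z" "z < x" "x powr (-q) - (x-1) powr (-q) = -q * z powr (-q-1)" by auto
  have e: "-q-1 = -(q+1)" by simp
  have "x powr (-(q+1)) \<le> z powr (-(q+1))"
    by (rule powr_mono2') (use z q x in auto)
  then have "q * x powr (-(q+1)) \<le> q * z powr (-(q+1))" using q by (simp add: mult_left_mono)
  also have "q * z powr (-(q+1)) = (x-1) powr (-q) - x powr (-q)" using z(3) unfolding e by simp
  finally show ?thesis using q by (simp add: field_simps)
qed

lemma tele_sum: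
  fixes q :: real and M :: nat
  assumes q: "q > 0" and M: "M \<ge> 1"
  shows "(\<Sum>j\<in>{Suc M..<Suc M + k}. real j powr (-(q+1))) \<le> (real M powr (-q) - real (M + k) powr (-q)) / q"
proof (induction k)
  case 0 then show ?case by simp
next
  case (Suc k)
  have "(\<Sum>j\<in>{Suc M..<Suc M + Suc k}. real j powr (-(q+1))) = 
        (\<Sum>j\<in>{Suc M..<Suc M + k}. real j powr (-(q+1))) + real (Suc M + k) powr (-(q+1))"
    by simp
  also have "\<dots> \<le> (real M powr (-q) - real (M + k) powr (-q)) / q + 
       ((real (Suc M + k) - 1) powr (-q) - real (Suc M + k) powr (-q)) / q"
    using Suc tele_step[OF q, of "real (Suc M + k)"] M by simp
  also have "\<dots> = (real M powr (-q) - real (M + Suc k) powr (-q)) / q"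
    using q by (simp add: field_simps)
  finally show ?case .
qed

lemma tail_sum:
  fixes q :: real and M n :: nat
  assumes q: "q > 0" and M: "M \<ge> 1"
  shows "(\<Sum>j\<in>{Suc M..<n}. real j powr (-(q+1))) \<le> real M powr (-q) / q"
proof -
  have "(\<Sum>j\<in>{Suc M..<n}. real j powr (-(q+1))) \<le> (\<Sum>j\<in>{Suc M..<Suc M + n}. real j powr (-(q+1)))"
    by (rule sum_mono2) auto
  also have "\<dots> \<le> (real M powr (-q) - real (M + n) powr (-q)) / q" by (rule tele_sum[OF q M])
  also have "\<dots> \<le> real M powr (-q) / q" using q by (simp add: divide_right_mono)
  finally show ?thesis .
qed

lemma psum_bound:
  fixes s A :: real and n :: nat
  assumes s: "s > 1/4" and A: "A \<ge> 1"
  shows "(\<Sum>j<n. (A + (real j * pi)^2) powr (- 2 * s)) \<le> (3 + 1/(4 * s-1)) * A powr (1/2 - 2 * s)"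
proof -
  define M where "M = nat \<lceil>sqrt A\<rceil>"
  have sA: "sqrt A \<ge> 1" using A by simp
  have M1: "real M \<ge> sqrt A" "real M \<le> sqrt A + 1" unfolding M_def using sA by linarith+
  have Mge: "M \<ge> 1" using M1 sA by linarith
  define q where "q = 4 * s - 1"
  have q: "q > 0" using s by (simp add: q_def)
  have split: "(\<Sum>j<n. (A + (real j * pi)^2) powr (- 2 * s)) \<le>
     (\<Sum>j\<in>{..M}. (A + (real j * pi)^2) powr (- 2 * s)) + (\<Sum>j\<in>{Suc M..<n}. (A + (real j * pi)^2) powr (- 2 * s))"
  proof -
    have "{..<n} \<subseteq> {..M} \<union> {Suc M..<n}" by auto
    then have "(\<Sum>j<n. (A + (real j * pi)^2) powr (- 2 * s)) \<le> (\<Sum>j\<in>{..M} \<union> {Suc M..<n}. (A + (real j * pi)^2) powr (- 2 * s))"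
      by (intro sum_mono2) auto
    also have "\<dots> = (\<Sum>j\<in>{..M}. (A + (real j * pi)^2) powr (- 2 * s)) + (\<Sum>j\<in>{Suc M..<n}. (A + (real j * pi)^2) powr (- 2 * s))"
      by (rule sum.union_disjoint) auto
    finally show ?thesis .
  qed
  have p1: "(\<Sum>j\<in>{..M}. (A + (real j * pi)^2) powr (- 2 * s)) \<le> 3 * A powr (1/2 - 2 * s)"
  proof -
    have "(\<Sum>j\<in>{..M}. (A + (real j * pi)^2) powr (- 2 * s)) \<le> (\<Sum>j\<in>{..M}. A powr (- 2 * s))"
      by (intro sum_mono powr_mono2') (use A s in auto)
    also have "\<dots> = (real M + 1) * A powr (- 2 * s)" by simp
    also have "\<dots> \<le> (3 * sqrt A) * A powr (- 2 * s)"
    proof (rule mult_right_mono)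
      show "real M + 1 \<le> 3 * sqrt A" using M1 sA by linarith
    qed simp
    also have "(3 * sqrt A) * A powr (- 2 * s) = 3 * A powr (1/2 - 2 * s)"
    proof -
      have "sqrt A = A powr (1/2)" using A by (simp add: powr_half_sqrt)
      moreover have "A powr (1/2) * A powr (- 2 * s) = A powr (1/2 + - 2 * s)" by (rule powr_add[symmetric])
      ultimately show ?thesis by simp
    qed
    finally show ?thesis .
  qed
  have p2: "(\<Sum>j\<in>{Suc M..<n}. (A + (real j * pi)^2) powr (- 2 * s)) \<le> 1/(4 * s-1) * A powr (1/2 - 2 * s)"
  proof -
    have "(\<Sum>j\<in>{Suc M..<n}. (A + (real j * pi)^2) powr (- 2 * s)) \<le> (\<Sum>j\<in>{Suc M..<n}. real j powr (-(q+1)))"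
    proof (intro sum_mono)
      fix j assume j: "j \<in> {Suc M..<n}"
      then have jp: "real j > 0" by auto
      have "(A + (real j * pi)^2) powr (- 2 * s) \<le> ((real j)^2) powr (- 2 * s)"
      proof (rule powr_mono2')
        have "(real j)^2 \<le> (real j * pi)^2"
          by (rule power_mono) (use jp pi_gt3 in auto)
        then show "(real j)^2 \<le> A + (real j * pi)^2" using A by linarith
      qed (use s jp in auto)
      also have "((real j)^2) powr (- 2 * s) = real j powr (-(q+1))"
      proof -
        have e2: "(real j)^2 = real j powr 2" using jp by simp
        have "((real j)^2) powr (- 2 * s) = real j powr (2 * (- 2 * s))" by (subst e2, rule powr_powr)
        also have "2 * (- 2 * s) = -(q+1)" by (simp add: q_def)
        finally show ?thesis .
      qed
      finally show "(A + (real j * pi)^2) powr (- 2 * s) \<le> real j powr (-(q+1))" .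
    qed
    also have "\<dots> \<le> real M powr (-q) / q" by (rule tail_sum[OF q Mge])
    also have "\<dots> \<le> (sqrt A) powr (-q) / q"
      by (intro divide_right_mono powr_mono2') (use q M1 sA in auto)
    also have "(sqrt A) powr (-q) = A powr (1/2 - 2 * s)"
    proof -
      have "sqrt A = A powr (1/2)" using A by (simp add: powr_half_sqrt)
      then have "(sqrt A) powr (-q) = A powr (1/2 * -q)" by (simp add: powr_powr)
      also have "1/2 * -q = 1/2 - 2 * s" by (simp add: q_def algebra_simps)
      finally show ?thesis .
    qed
    finally show ?thesis by (simp add: q_def)
  qed
  have "(3 + 1/(4 * s-1)) * A powr (1/2 - 2 * s) = 3 * A powr (1/2 - 2 * s) + 1/(4 * s-1) * A powr (1/2 - 2 * s)"
    by (simp add: distrib_right)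
  then show ?thesis using split p1 p2 by linarith
qed


definition aco :: "(real \<times> real \<Rightarrow> real) \<Rightarrow> nat \<Rightarrow> nat \<Rightarrow> real" where
  "aco w i j = ipO w (w_fun i j)"
definition bco :: "(real \<times> real \<Rightarrow> real) \<Rightarrow> nat \<Rightarrow> real" where
  "bco w i = (\<Sum>j. aco w i j * c2 j)"
definition Kc :: "real \<Rightarrow> real" where "Kc s = 2 * (3 + 1/(4 * s - 1))"

lemma lamO_eq: "1 - lamO i j = (1 - lamI i) + (real j * pi)^2"
  by (simp add: lamO_def lamI_def)

lemma lamI_ge: "1 - lamI i \<ge> 1" by (simp add: lamI_def)

lemma c2_sq: "(c2 j)^2 \<le> 2" "c2 j > 0" by (auto simp: c2_def)

lemma row_bound:
  fixes s :: real and a :: "nat \<Rightarrow> real" and i n :: nat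
  assumes s: "s > 1/4"
  shows "(1 - lamI i) powr (2 * (s - 1/4)) * (\<Sum>j<n. \<bar>a j\<bar> * c2 j)^2 \<le>
         Kc s * (\<Sum>j<n. (1 - lamO i j) powr (2 * s) * (a j)^2)"
proof -
  define A where "A = 1 - lamI i"
  have A: "A \<ge> 1" unfolding A_def by (rule lamI_ge)
  define W where "W j = (A + (real j * pi)^2) powr (2 * s)" for j
  have Wpos: "W j > 0" for j
  proof -
    have "A + (real j * pi)^2 > 0" using A by (simp add: add_pos_nonneg)
    then show ?thesis unfolding W_def by simp
  qed
  have W: "(1 - lamO i j) powr (2 * s) = W j" for j unfolding W_def A_def lamO_eq ..
  have cs: "(\<Sum>j<n. (sqrt (W j) * \<bar>a j\<bar>) * (c2 j / sqrt (W j)))^2 \<le>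
      (\<Sum>j<n. (sqrt (W j) * \<bar>a j\<bar>)^2) * (\<Sum>j<n. (c2 j / sqrt (W j))^2)"
    by (rule Cauchy_Schwarz_ineq_sum)
  have e1: "(sqrt (W j) * \<bar>a j\<bar>) * (c2 j / sqrt (W j)) = \<bar>a j\<bar> * c2 j" for j
    using Wpos[of j] by (simp add: field_simps)
  have e2: "(sqrt (W j) * \<bar>a j\<bar>)^2 = W j * (a j)^2" for j
    using Wpos[of j] by (simp add: power_mult_distrib)
  have e3: "(c2 j / sqrt (W j))^2 = (c2 j)^2 * (A + (real j * pi)^2) powr (- 2 * s)" for j
  proof -
    have "(c2 j / sqrt (W j))^2 = (c2 j)^2 / W j" using Wpos[of j] by (simp add: power_divide)
    also have "\<dots> = (c2 j)^2 * (A + (real j * pi)^2) powr (- 2 * s)"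
      unfolding W_def by (simp add: powr_minus_divide divide_inverse)
    finally show ?thesis .
  qed
  have "(\<Sum>j<n. (c2 j / sqrt (W j))^2) \<le> (\<Sum>j<n. 2 * (A + (real j * pi)^2) powr (- 2 * s))"
    unfolding e3 by (intro sum_mono mult_right_mono) (auto simp: c2_sq)
  also have "\<dots> = 2 * (\<Sum>j<n. (A + (real j * pi)^2) powr (- 2 * s))" by (simp add: sum_distrib_left)
  also have "\<dots> \<le> 2 * ((3 + 1/(4 * s - 1)) * A powr (1/2 - 2 * s))"
    using psum_bound[OF s A] by simp
  also have "2 * ((3 + 1/(4 * s - 1)) * A powr (1/2 - 2 * s)) = Kc s * A powr (1/2 - 2 * s)"
    by (simp add: Kc_def)
  finally have kb: "(\<Sum>j<n. (c2 j / sqrt (W j))^2) \<le> Kc s * A powr (1/2 - 2 * s)" .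
  have Rnn: "0 \<le> (\<Sum>j<n. W j * (a j)^2)" using Wpos by (intro sum_nonneg) (simp add: less_imp_le)
  have "(\<Sum>j<n. \<bar>a j\<bar> * c2 j)^2 \<le> (\<Sum>j<n. W j * (a j)^2) * (Kc s * A powr (1/2 - 2 * s))"
    using cs kb Rnn unfolding e1 e2 by (meson mult_left_mono order_trans)
  then have "A powr (2 * (s - 1/4)) * (\<Sum>j<n. \<bar>a j\<bar> * c2 j)^2 \<le>
      A powr (2 * (s - 1/4)) * ((\<Sum>j<n. W j * (a j)^2) * (Kc s * A powr (1/2 - 2 * s)))"
    by (rule mult_left_mono) simp
  also have "\<dots> = Kc s * (\<Sum>j<n. W j * (a j)^2) * (A powr (2 * (s - 1/4)) * A powr (1/2 - 2 * s))"
    by (simp add: ac_simps)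
  also have "A powr (2 * (s - 1/4)) * A powr (1/2 - 2 * s) = 1"
  proof -
    have "A powr (2 * (s - 1/4)) * A powr (1/2 - 2 * s) = A powr (2 * (s - 1/4) + (1/2 - 2 * s))"
      by (rule powr_add[symmetric])
    also have "2 * (s - 1/4) + (1/2 - 2 * s) = 0" by simp
    finally show ?thesis using A by simp
  qed
  finally show ?thesis unfolding A_def W by simp
qed

lemma rows:
  fixes G :: "nat \<Rightarrow> nat \<Rightarrow> real"
  assumes nn: "\<And>i j. G i j \<ge> 0" and sm: "(\<lambda>(i,j). G i j) summable_on UNIV"
  shows "\<And>i. summable (G i)" "summable (\<lambda>i. suminf (G i))"
    "(\<Sum>i. suminf (G i)) = (\<Sum>\<^sub>\<infinity>(i,j)\<in>UNIV. G i j)"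
proof -
  have sm': "(\<lambda>(i,j). G i j) summable_on Sigma UNIV (\<lambda>_. UNIV)" using sm by simp
  have rs: "G i summable_on UNIV" for i by (rule summable_on_SigmaD1[OF sm']) simp
  show "summable (G i)" for i using rs summable_on_imp_summable by blast
  have eq: "infsum (G i) UNIV = suminf (G i)" for i
    using has_sum_imp_sums[OF has_sum_infsum[OF rs[of i]]] by (simp add: sums_iff)
  have "((\<lambda>i. infsum (G i) UNIV) has_sum (\<Sum>\<^sub>\<infinity>(i,j)\<in>UNIV. G i j)) UNIV"
  proof (rule has_sum_SigmaD[where B="\<lambda>_. UNIV"])
    show "((\<lambda>(i,j). G i j) has_sum (\<Sum>\<^sub>\<infinity>(i,j)\<in>UNIV. G i j)) (Sigma UNIV (\<lambda>_. UNIV))"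
      using has_sum_infsum[OF sm] by simp
    show "((\<lambda>y. (\<lambda>(i,j). G i j) (x, y)) has_sum infsum (G x) UNIV) UNIV" for x
      using has_sum_infsum[OF rs[of x]] by simp
  qed
  then have "(\<lambda>i. suminf (G i)) sums (\<Sum>\<^sub>\<infinity>(i,j)\<in>UNIV. G i j)"
    using has_sum_imp_sums eq by simp
  then show "summable (\<lambda>i. suminf (G i))" "(\<Sum>i. suminf (G i)) = (\<Sum>\<^sub>\<infinity>(i,j)\<in>UNIV. G i j)"
    by (auto simp: sums_iff)
qed

lemma key:
  fixes s :: real and w :: "real \<times> real \<Rightarrow> real"
  assumes s: "s > 1/4" and w: "w \<in> XsO s"
  shows "\<And>i. summable (\<lambda>j. \<bar>aco w i j * c2 j\<bar>)"
    and "summable (\<lambda>i. (1 - lamI i) powr (2 * (s - 1/4)) * (bco w i)^2)"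
    and "(\<Sum>i. (1 - lamI i) powr (2 * (s - 1/4)) * (bco w i)^2) \<le> Kc s * (normO s w)^2"
proof -
  define G where "G i j = (1 - lamO i j) powr (2 * s) * (aco w i j)^2" for i j
  have Gnn: "G i j \<ge> 0" for i j unfolding G_def by simp
  have sm: "(\<lambda>(i,j). G i j) summable_on UNIV" using w unfolding XsO_def G_def aco_def by simp
  note R = rows[OF Gnn sm]
  define R where "R i = suminf (G i)" for i
  have Rs: "summable R" and RS: "(\<Sum>i. R i) = (\<Sum>\<^sub>\<infinity>(i,j)\<in>UNIV. G i j)" using R(2,3) unfolding R_def[abs_def] by auto
  have Snn: "(\<Sum>\<^sub>\<infinity>(i,j)\<in>UNIV. G i j) \<ge> 0" by (rule infsum_nonneg) (auto simp: Gnn)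
  have nO: "(normO s w)^2 = (\<Sum>\<^sub>\<infinity>(i,j)\<in>UNIV. G i j)"
    unfolding normO_def G_def aco_def using Snn unfolding G_def aco_def by simp
  define nu where "nu i = (1 - lamI i) powr (2 * (s - 1/4))" for i
  have nu1: "nu i \<ge> 1" for i unfolding nu_def using lamI_ge s by (intro ge_one_powr_ge_zero) auto
  have Rnn: "R i \<ge> 0" for i unfolding R_def using R(1) Gnn by (simp add: suminf_nonneg)
  define B where "B i = sqrt (Kc s * R i / nu i)" for i
  have Kpos: "Kc s > 0"
  proof -
    have "1/(4 * s - 1) > 0" using s by simp
    then show ?thesis unfolding Kc_def by (intro mult_pos_pos add_pos_pos) auto
  qed
  have pb: "(\<Sum>j<n. \<bar>aco w i j * c2 j\<bar>) \<le> B i" for i n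
  proof -
    have "nu i * (\<Sum>j<n. \<bar>aco w i j\<bar> * c2 j)^2 \<le> Kc s * (\<Sum>j<n. G i j)"
      unfolding nu_def G_def by (rule row_bound[OF s])
    also have "\<dots> \<le> Kc s * R i" unfolding R_def
      by (intro mult_left_mono sum_le_suminf R(1)) (use Gnn Kpos in auto)
    finally have "(\<Sum>j<n. \<bar>aco w i j\<bar> * c2 j)^2 \<le> Kc s * R i / nu i"
      using nu1[of i] by (simp add: field_simps)
    then have "(\<Sum>j<n. \<bar>aco w i j\<bar> * c2 j) \<le> B i" unfolding B_def by (rule real_le_rsqrt)
    moreover have "\<bar>aco w i j * c2 j\<bar> = \<bar>aco w i j\<bar> * c2 j" for j using c2_sq(2)[of j] by (simp add: abs_mult)
    ultimately show ?thesis by simp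
  qed
  show sa: "summable (\<lambda>j. \<bar>aco w i j * c2 j\<bar>)" for i
    by (rule summableI_nonneg_bounded[where x="B i"]) (use pb in auto)
  have bb: "nu i * (bco w i)^2 \<le> Kc s * R i" for i
  proof -
    have "\<bar>bco w i\<bar> \<le> (\<Sum>j. \<bar>aco w i j * c2 j\<bar>)" unfolding bco_def by (rule summable_rabs[OF sa])
    also have "\<dots> \<le> B i" by (rule suminf_le_const[OF sa pb])
    finally have "\<bar>bco w i\<bar> \<le> B i" .
    then have "(bco w i)^2 \<le> (B i)^2" by (metis abs_ge_zero abs_le_square_iff abs_of_nonneg order_trans)
    also have "(B i)^2 = Kc s * R i / nu i" unfolding B_def using Kpos Rnn nu1[of i] by simp
    finally show ?thesis using nu1[of i] by (simp add: field_simps)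
  qed
  have nn: "0 \<le> nu i * (bco w i)^2" for i using nu1[of i] by simp
  have ks: "summable (\<lambda>i. Kc s * R i)" using Rs by (rule summable_mult)
  show "summable (\<lambda>i. (1 - lamI i) powr (2 * (s - 1/4)) * (bco w i)^2)"
    unfolding nu_def[symmetric] by (rule summable_comparison_test'[OF ks]) (use bb nn in auto)
  then have "(\<Sum>i. nu i * (bco w i)^2) \<le> (\<Sum>i. Kc s * R i)"
    unfolding nu_def[symmetric] by (intro suminf_le bb ks)
  also have "\<dots> = Kc s * (normO s w)^2" using suminf_mult[OF Rs, of "Kc s"] RS nO by simp
  finally show "(\<Sum>i. (1 - lamI i) powr (2 * (s - 1/4)) * (bco w i)^2) \<le> Kc s * (normO s w)^2"
    unfolding nu_def .
qed


definition L2 :: "'a::euclidean_space set \<Rightarrow> ('a \<Rightarrow> real) \<Rightarrow> bool" where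
  "L2 S f \<longleftrightarrow> set_borel_measurable lborel S f \<and> set_integrable lborel S (\<lambda>x. (f x)\<^sup>2)"

lemma L2I_eq: "L2I = L2 I_int" by (simp add: fun_eq_iff L2I_def L2_def)
lemma L2O_eq: "L2O = L2 Omega" by (simp add: fun_eq_iff L2O_def L2_def)

locale fin_set =
  fixes S :: "'a::euclidean_space set"
  assumes S_sets: "S \<in> sets lborel" and S_fin: "emeasure lborel S < \<infinity>"
begin

lemma const_int: "set_integrable lborel S (\<lambda>x. c::real)"
  unfolding set_integrable_def using integrable_real_indicator[OF S_sets S_fin]
  by (simp add: integrable_mult_left)

lemma sbm_mult:
  assumes "set_borel_measurable lborel S f" "set_borel_measurable lborel S g"
  shows "set_borel_measurable lborel S (\<lambda>x. f x * (g x::real))"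
proof -
  have "(\<lambda>x. indicator S x *\<^sub>R (f x * g x)) = (\<lambda>x. (indicator S x *\<^sub>R f x) * (indicator S x *\<^sub>R g x))"
    by (auto simp: fun_eq_iff indicator_def)
  then show ?thesis using assms unfolding set_borel_measurable_def by simp
qed

lemma sbm_add:
  assumes "set_borel_measurable lborel S f" "set_borel_measurable lborel S g"
  shows "set_borel_measurable lborel S (\<lambda>x. f x + (g x::real))"
proof -
  have "(\<lambda>x. indicator S x *\<^sub>R (f x + g x)) = (\<lambda>x. (indicator S x *\<^sub>R f x) + (indicator S x *\<^sub>R g x))"
    by (auto simp: fun_eq_iff indicator_def)
  then show ?thesis using assms unfolding set_borel_measurable_def by simp
qed

lemma sbm_const: "set_borel_measurable lborel S (\<lambda>x. c::real)"
  unfolding set_borel_measurable_def using S_sets by simp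

lemma sbm_cmult:
  assumes "set_borel_measurable lborel S f"
  shows "set_borel_measurable lborel S (\<lambda>x. c * (f x::real))"
  by (rule sbm_mult[OF sbm_const assms])

lemma L2_meas: "L2 S f \<Longrightarrow> set_borel_measurable lborel S f" by (simp add: L2_def)

lemma L2_int:
  assumes "L2 S f" shows "set_integrable lborel S f"
proof (rule set_integrable_bound)
  show "set_integrable lborel S (\<lambda>x. 1 + (f x)\<^sup>2)"
    using assms const_int unfolding L2_def by (intro set_integral_add(1)) auto
  show "set_borel_measurable lborel S f" using assms by (simp add: L2_def)
  show "AE x in lborel. x \<in> S \<longrightarrow> norm (f x) \<le> norm (1 + (f x)\<^sup>2)"
  proof (intro AE_I2 impI)
    fix x
    have "\<bar>f x\<bar> \<le> 1 + (f x)\<^sup>2"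
    proof (cases "\<bar>f x\<bar> \<le> 1")
      case True then show ?thesis by (smt (verit) zero_le_power2)
    next
      case False then have "\<bar>f x\<bar> * 1 \<le> \<bar>f x\<bar> * \<bar>f x\<bar>" by (intro mult_left_mono) auto
      then show ?thesis using abs_mult_self_eq[of "f x"] by (simp add: power2_eq_square)
    qed
    then show "norm (f x) \<le> norm (1 + (f x)\<^sup>2)" by simp
  qed
qed

lemma L2_mult_int:
  assumes f: "L2 S f" and g: "L2 S g" shows "set_integrable lborel S (\<lambda>x. f x * g x)"
proof (rule set_integrable_bound)
  show "set_integrable lborel S (\<lambda>x. (f x)\<^sup>2 + (g x)\<^sup>2)"
    using assms unfolding L2_def by (intro set_integral_add(1)) auto
  show "set_borel_measurable lborel S (\<lambda>x. f x * g x)" using assms by (intro sbm_mult) (simp_all add: L2_def)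
  show "AE x in lborel. x \<in> S \<longrightarrow> norm (f x * g x) \<le> norm ((f x)\<^sup>2 + (g x)\<^sup>2)"
  proof (intro AE_I2 impI)
    fix x
    have "\<bar>f x * g x\<bar> \<le> (f x)\<^sup>2 + (g x)\<^sup>2"
    proof -
      have "0 \<le> (\<bar>f x\<bar> - \<bar>g x\<bar>)\<^sup>2" by simp
      then have "2 * (\<bar>f x\<bar> * \<bar>g x\<bar>) \<le> (f x)\<^sup>2 + (g x)\<^sup>2"
        by (simp add: power2_eq_square algebra_simps abs_mult_self_eq)
      moreover have "0 \<le> \<bar>f x\<bar> * \<bar>g x\<bar>" by simp
      ultimately have "\<bar>f x\<bar> * \<bar>g x\<bar> \<le> (f x)\<^sup>2 + (g x)\<^sup>2" by linarith
      then show ?thesis by (simp add: abs_mult)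
    qed
    then show "norm (f x * g x) \<le> norm ((f x)\<^sup>2 + (g x)\<^sup>2)" by simp
  qed
qed

lemma L2_lin:
  assumes f: "L2 S f" and g: "L2 S g" shows "L2 S (\<lambda>x. a * f x + b * g x)"
  unfolding L2_def
proof
  show "set_borel_measurable lborel S (\<lambda>x. a * f x + b * g x)"
    using f g by (intro sbm_add sbm_cmult) (simp_all add: L2_def)
  show "set_integrable lborel S (\<lambda>x. (a * f x + b * g x)\<^sup>2)"
  proof (rule set_integrable_bound)
    show "set_integrable lborel S (\<lambda>x. 2 * a\<^sup>2 * (f x)\<^sup>2 + 2 * b\<^sup>2 * (g x)\<^sup>2)"
      using assms unfolding L2_def by (intro set_integral_add(1) set_integrable_mult_right) auto
    show "set_borel_measurable lborel S (\<lambda>x. (a * f x + b * g x)\<^sup>2)"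
      using f g unfolding power2_eq_square by (intro sbm_mult sbm_add sbm_cmult) (simp_all add: L2_def)
    show "AE x in lborel. x \<in> S \<longrightarrow> norm ((a * f x + b * g x)\<^sup>2) \<le> norm (2 * a\<^sup>2 * (f x)\<^sup>2 + 2 * b\<^sup>2 * (g x)\<^sup>2)"
    proof (intro AE_I2 impI)
      fix x
      have "(a * f x + b * g x)\<^sup>2 \<le> 2 * a\<^sup>2 * (f x)\<^sup>2 + 2 * b\<^sup>2 * (g x)\<^sup>2"
      proof -
        have "0 \<le> (a * f x - b * g x)\<^sup>2" by simp
        then show ?thesis by (simp add: power2_eq_square algebra_simps)
      qed
      then show "norm ((a * f x + b * g x)\<^sup>2) \<le> norm (2 * a\<^sup>2 * (f x)\<^sup>2 + 2 * b\<^sup>2 * (g x)\<^sup>2)" by simp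
    qed
  qed
qed

lemma L2_bounded:
  assumes "set_borel_measurable lborel S f" "\<And>x. x \<in> S \<Longrightarrow> \<bar>f x\<bar> \<le> B"
  shows "L2 S f"
  unfolding L2_def
proof
  show "set_borel_measurable lborel S f" by fact
  show "set_integrable lborel S (\<lambda>x. (f x)\<^sup>2)"
  proof (rule set_integrable_bound)
    show "set_integrable lborel S (\<lambda>x. B\<^sup>2)" by (rule const_int)
    show "set_borel_measurable lborel S (\<lambda>x. (f x)\<^sup>2)" unfolding power2_eq_square by (rule sbm_mult[OF assms(1) assms(1)])
    show "AE x in lborel. x \<in> S \<longrightarrow> norm ((f x)\<^sup>2) \<le> norm (B\<^sup>2)"
    proof (intro AE_I2 impI)
      fix x assume "x \<in> S"
      then have "\<bar>f x\<bar> \<le> B" by (rule assms(2))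
      then have "(f x)\<^sup>2 \<le> B\<^sup>2" by (metis abs_ge_zero abs_le_square_iff abs_of_nonneg order_trans)
      then show "norm ((f x)\<^sup>2) \<le> norm (B\<^sup>2)" by simp
    qed
  qed
qed

lemma L2_zero: "L2 S (\<lambda>x. 0)" by (rule L2_bounded[where B=0]) (auto simp: sbm_const)

lemma L2_sum:
  assumes "finite F" "\<And>k. k \<in> F \<Longrightarrow> L2 S (f k)"
  shows "L2 S (\<lambda>x. \<Sum>k\<in>F. c k * f k x)"
  using assms
proof (induction F rule: finite_induct)
  case empty then show ?case by (simp add: L2_zero)
next
  case (insert k F)
  have ih: "L2 S (\<lambda>x. \<Sum>k\<in>F. c k * f k x)" using insert.IH insert.prems by blast
  have "L2 S (\<lambda>x. c k * f k x + 1 * (\<Sum>k\<in>F. c k * f k x))"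
    by (rule L2_lin[OF _ ih]) (use insert.prems in auto)
  then show ?case using insert by simp
qed

lemma ip_lin:
  assumes f: "L2 S f" and g: "L2 S g" and h: "L2 S h"
  shows "(LINT x:S|lborel. (a * f x + b * g x) * h x) = a * (LINT x:S|lborel. f x * h x) + b * (LINT x:S|lborel. g x * h x)"
proof -
  have i1: "set_integrable lborel S (\<lambda>x. f x * h x)" by (rule L2_mult_int[OF f h])
  have i2: "set_integrable lborel S (\<lambda>x. g x * h x)" by (rule L2_mult_int[OF g h])
  have "(LINT x:S|lborel. (a * f x + b * g x) * h x) = (LINT x:S|lborel. a * (f x * h x) + b * (g x * h x))"
    by (simp add: algebra_simps)
  also have "\<dots> = (LINT x:S|lborel. a * (f x * h x)) + (LINT x:S|lborel. b * (g x * h x))"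
    using i1 i2 by (intro set_integral_add(2)) auto
  also have "\<dots> = a * (LINT x:S|lborel. f x * h x) + b * (LINT x:S|lborel. g x * h x)" by simp
  finally show ?thesis .
qed

lemma ip_sum:
  assumes "finite F" "\<And>k. k \<in> F \<Longrightarrow> L2 S (f k)" and h: "L2 S h"
  shows "(LINT x:S|lborel. (\<Sum>k\<in>F. c k * f k x) * h x) = (\<Sum>k\<in>F. c k * (LINT x:S|lborel. f k x * h x))"
  using assms(1,2)
proof (induction F rule: finite_induct)
  case empty then show ?case by simp
next
  case (insert k F)
  have "(LINT x:S|lborel. (\<Sum>k\<in>insert k F. c k * f k x) * h x) =
        (LINT x:S|lborel. (c k * f k x + 1 * (\<Sum>k\<in>F. c k * f k x)) * h x)"
    using insert by simp
  also have "\<dots> = c k * (LINT x:S|lborel. f k x * h x) + 1 * (LINT x:S|lborel. (\<Sum>k\<in>F. c k * f k x) * h x)"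
    by (rule ip_lin) (auto intro!: L2_sum insert.hyps insert.prems h)
  also have "\<dots> = (\<Sum>k\<in>insert k F. c k * (LINT x:S|lborel. f k x * h x))" using insert by simp
  finally show ?case .
qed

lemma ip_cong_AE:
  fixes f g h :: "'a \<Rightarrow> real"
  assumes f: "set_borel_measurable lborel S f" and g: "set_borel_measurable lborel S g"
    and h: "set_borel_measurable lborel S h"
    and ae: "AE x in lborel. x \<in> S \<longrightarrow> f x = g x"
  shows "(LINT x:S|lborel. f x * h x) = (LINT x:S|lborel. g x * h x)"
proof -
  have m1: "(\<lambda>x. indicator S x *\<^sub>R (f x * h x)) \<in> borel_measurable lborel"
    using sbm_mult[OF f h] by (simp add: set_borel_measurable_def)
  have m2: "(\<lambda>x. indicator S x *\<^sub>R (g x * h x)) \<in> borel_measurable lborel"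
    using sbm_mult[OF g h] by (simp add: set_borel_measurable_def)
  show ?thesis unfolding set_lebesgue_integral_def
    by (rule integral_cong_AE[OF m1 m2]) (use ae in \<open>auto elim!: AE_mp\<close>)
qed

end

lemma I_fin: "fin_set I_int"
  by unfold_locales (auto simp: I_int_def)

lemma Omega_fin: "fin_set Omega"
proof
  show "Omega \<in> sets lborel" unfolding Omega_def by (simp add: open_Times)
  have "emeasure lborel Omega = emeasure (lborel \<Otimes>\<^sub>M lborel) ({-1<..<1::real} \<times> {0<..<1::real})"
    by (simp add: lborel_prod Omega_def)
  also have "\<dots> = emeasure lborel {-1<..<1::real} * emeasure lborel {0<..<1::real}"
    by (rule sigma_finite_measure.emeasure_pair_measure_Times) (auto intro: sigma_finite_lborel)
  finally show "emeasure lborel Omega < \<infinity>" by (simp add: ennreal_mult_less_top)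
qed


lemma (in fin_set) sbm_cont:
  assumes "continuous_on UNIV f" shows "set_borel_measurable lborel S (f::'a \<Rightarrow> real)"
proof -
  have "f \<in> borel_measurable lborel" using borel_measurable_continuous_onI[OF assms] by simp
  then show ?thesis unfolding set_borel_measurable_def using S_sets by simp
qed

lemma u_bound: "\<bar>u_fun i x\<bar> \<le> 1"
  by (auto simp: u_fun_def c1_def abs_mult intro: mult_le_one)

lemma v_bound: "\<bar>v_fun j y\<bar> \<le> 2"
proof -
  have "sqrt 2 \<le> 2" by (rule real_le_lsqrt) auto
  then have "\<bar>c2 j\<bar> \<le> 2" by (auto simp: c2_def)
  moreover have "\<bar>cos (real j * pi * y)\<bar> \<le> 1" by simp
  ultimately show ?thesis unfolding v_fun_def abs_mult using mult_mono[of "\<bar>c2 j\<bar>" 2 "\<bar>cos (real j * pi * y)\<bar>" 1] by simp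
qed

lemma cont_w: "continuous_on UNIV (w_fun i j)"
  unfolding w_fun_def by (intro continuous_intros continuous_on_compose2[OF cont_u] continuous_on_compose2[OF cont_v]) auto

lemma L2_u: "L2 I_int (u_fun i)"
  by (rule fin_set.L2_bounded[OF I_fin fin_set.sbm_cont[OF I_fin cont_u] u_bound])

lemma L2_w: "L2 Omega (w_fun i j)"
proof (rule fin_set.L2_bounded[OF Omega_fin fin_set.sbm_cont[OF Omega_fin cont_w]])
  fix p show "\<bar>w_fun i j p\<bar> \<le> 2"
    unfolding w_fun_def abs_mult using mult_mono[OF u_bound v_bound] by simp
qed

lemma ipO_eq: "ipO f g = (LINT p:Omega|lborel. f p * g p)" by (simp add: ipO_def)
lemma ipI_eq: "ipI f g = (LINT p:I_int|lborel. f p * g p)" by (simp add: ipI_def)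

lemma comb_eq: "(\<lambda>p. \<Sum>(i,j)\<in>F. a i j * w_fun i j p) = (\<lambda>p. \<Sum>q\<in>F. (\<lambda>(i,j). a i j) q * (\<lambda>(i,j). w_fun i j) q p)"
  by (auto simp: fun_eq_iff case_prod_beta intro!: sum.cong)

lemma comb_L2:
  assumes "finite F" shows "L2 Omega (\<lambda>p. \<Sum>(i,j)\<in>F. a i j * w_fun i j p)"
  unfolding comb_eq by (rule fin_set.L2_sum[OF Omega_fin assms]) (auto simp: L2_w)

lemma comb_aco:
  assumes F: "finite F"
  shows "aco (\<lambda>p. \<Sum>(i,j)\<in>F. a i j * w_fun i j p) k l = (if (k,l) \<in> F then a k l else 0)"
proof -
  have "aco (\<lambda>p. \<Sum>(i,j)\<in>F. a i j * w_fun i j p) k l =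
     (\<Sum>q\<in>F. (\<lambda>(i,j). a i j) q * (LINT p:Omega|lborel. (\<lambda>(i,j). w_fun i j) q p * w_fun k l p))"
    unfolding aco_def ipO_eq comb_eq
    by (rule fin_set.ip_sum[OF Omega_fin F]) (auto simp: L2_w)
  also have "\<dots> = (\<Sum>q\<in>F. (if q = (k,l) then (\<lambda>(i,j). a i j) q else 0))"
    by (intro sum.cong refl) (auto simp: ipO_eq[symmetric] ortho_w split: if_split_asm)
  also have "\<dots> = (if (k,l) \<in> F then a k l else 0)"
    using F by (simp add: sum.delta)
  finally show ?thesis .
qed

lemma comb_XsO:
  assumes F: "finite F"
  shows "(\<lambda>p. \<Sum>(i,j)\<in>F. a i j * w_fun i j p) \<in> XsO s"
proof -
  let ?w = "\<lambda>p. \<Sum>(i,j)\<in>F. a i j * w_fun i j p"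
  have "(\<lambda>(i,j). (1 - lamO i j) powr (2 * s) * (ipO ?w (w_fun i j))\<^sup>2) summable_on F"
    using F by simp
  then have "(\<lambda>(i,j). (1 - lamO i j) powr (2 * s) * (ipO ?w (w_fun i j))\<^sup>2) summable_on UNIV"
  proof (rule summable_on_cong_neutral[THEN iffD1, rotated -1])
    fix q assume "q \<in> UNIV - F"
    then show "(\<lambda>(i,j). (1 - lamO i j) powr (2 * s) * (ipO ?w (w_fun i j))\<^sup>2) q = 0"
      using comb_aco[OF F, of a] by (auto simp: aco_def split: prod.splits)
  qed auto
  then show ?thesis using comb_L2[OF F] by (simp add: XsO_def L2O_eq)
qed

lemma Tr_comb: "Tr (\<lambda>p. \<Sum>(i,j)\<in>F. a i j * w_fun i j p) = (\<lambda>x. \<Sum>q\<in>F. ((\<lambda>(i,j). a i j * c2 j) q) * u_fun (fst q) x)"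
  by (auto simp: fun_eq_iff Tr_def w_fun_def v_fun_def case_prod_beta intro!: sum.cong)

lemma Tr_L2:
  assumes F: "finite F" shows "L2 I_int (Tr (\<lambda>p. \<Sum>(i,j)\<in>F. a i j * w_fun i j p))"
  unfolding Tr_comb by (rule fin_set.L2_sum[OF I_fin F]) (auto simp: L2_u)

lemma Tr_coef:
  assumes F: "finite F"
  shows "ipI (Tr (\<lambda>p. \<Sum>(i,j)\<in>F. a i j * w_fun i j p)) (u_fun k) = bco (\<lambda>p. \<Sum>(i,j)\<in>F. a i j * w_fun i j p) k"
proof -
  have "ipI (Tr (\<lambda>p. \<Sum>(i,j)\<in>F. a i j * w_fun i j p)) (u_fun k) =
      (\<Sum>q\<in>F. ((\<lambda>(i,j). a i j * c2 j) q) * (LINT x:I_int|lborel. u_fun (fst q) x * u_fun k x))"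
    unfolding ipI_eq Tr_comb by (rule fin_set.ip_sum[OF I_fin F]) (auto simp: L2_u)
  also have "\<dots> = (\<Sum>q\<in>F. if fst q = k then (\<lambda>(i,j). a i j * c2 j) q else 0)"
    by (intro sum.cong refl) (auto simp: ipI_eq[symmetric] ortho_u)
  also have "\<dots> = (\<Sum>q\<in>{q\<in>F. fst q = k}. (\<lambda>(i,j). a i j * c2 j) q)"
    using F by (simp add: sum.inter_filter)
  also have "{q\<in>F. fst q = k} = Pair k ` {j. (k,j) \<in> F}" by force
  also have "(\<Sum>q\<in>Pair k ` {j. (k,j) \<in> F}. (\<lambda>(i,j). a i j * c2 j) q) = (\<Sum>j\<in>{j. (k,j) \<in> F}. a k j * c2 j)"
    by (subst sum.reindex) (auto simp: inj_on_def)
  also have "\<dots> = bco (\<lambda>p. \<Sum>(i,j)\<in>F. a i j * w_fun i j p) k"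
  proof -
    have fin: "finite {j. (k,j) \<in> F}"
    proof -
      have "{j. (k,j) \<in> F} \<subseteq> snd ` F" by force
      then show ?thesis using F finite_subset by blast
    qed
    have "bco (\<lambda>p. \<Sum>(i,j)\<in>F. a i j * w_fun i j p) k = (\<Sum>j. (if (k,j) \<in> F then a k j else 0) * c2 j)"
      unfolding bco_def comb_aco[OF F] ..
    also have "\<dots> = (\<Sum>j\<in>{j. (k,j) \<in> F}. (if (k,j) \<in> F then a k j else 0) * c2 j)"
      by (rule suminf_finite[OF fin]) auto
    also have "\<dots> = (\<Sum>j\<in>{j. (k,j) \<in> F}. a k j * c2 j)" by (intro sum.cong) auto
    finally show ?thesis by simp
  qed
  finally show ?thesis .
qed


lemma L2I_cont:
  assumes "continuous_on UNIV g" "\<And>x. x \<in> I_int \<Longrightarrow> \<bar>g x\<bar> \<le> B"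
  shows "L2 I_int g"
  by (rule fin_set.L2_bounded[OF I_fin fin_set.sbm_cont[OF I_fin assms(1)] assms(2)])

lemma cm: "cos (real m * pi * (x+1)/2) = cos (real m * (pi * (x+1)/2))" by (simp add: mult.assoc)

lemma cpow_cont: "continuous_on UNIV (\<lambda>x. cos (pi * (x+1)/2) ^ n * cos (real m * pi * (x+1)/2))"
  by (auto intro!: continuous_intros)

lemma cpow_bound: "\<bar>cos (pi * (x+1)/2) ^ n * cos (real m * pi * (x+1)/2)\<bar> \<le> 1"
  by (auto simp: abs_mult power_abs intro!: mult_le_one power_le_one)

lemma cpow_L2: "L2 I_int (\<lambda>x. cos (pi * (x+1)/2) ^ n * cos (real m * pi * (x+1)/2))"
  by (rule L2I_cont[OF cpow_cont cpow_bound])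

lemma cos_pow_orth:
  assumes f: "L2 I_int f" and z: "\<And>i. ipI f (u_fun i) = 0"
  shows "ipI (\<lambda>x. cos (pi * (x+1)/2) ^ n * cos (real m * pi * (x+1)/2)) f = 0"
proof (induction n arbitrary: m)
  case 0
  have "ipI f (u_fun m) = (LINT x:I_int|lborel. c1 m * (cos (real m * pi * (x+1)/2) * f x))"
    unfolding ipI_eq u_fun_def by (simp add: ac_simps)
  also have "\<dots> = c1 m * ipI (\<lambda>x. cos (pi * (x+1)/2) ^ 0 * cos (real m * pi * (x+1)/2)) f"
    unfolding ipI_eq by simp
  finally show ?case using z[of m] by (simp add: c1_def split: if_splits)
next
  case (Suc n)
  define d where "d = (if m \<le> 1 then 1 - m else m - 1)"
  have pw: "cos (pi * (x+1)/2) ^ Suc n * cos (real m * pi * (x+1)/2) =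
     (1/2) * (cos (pi * (x+1)/2) ^ n * cos (real d * pi * (x+1)/2)) +
     (1/2) * (cos (pi * (x+1)/2) ^ n * cos (real (1 + m) * pi * (x+1)/2))" for x
  proof -
    have "cos (real 1 * (pi * (x+1)/2)) * cos (real m * (pi * (x+1)/2)) =
      (cos (real d * (pi * (x+1)/2)) + cos (real (1 + m) * (pi * (x+1)/2))) / 2"
      unfolding d_def by (rule cos_prod_nat)
    then have E: "cos (pi * (x+1)/2) * cos (real m * pi * (x+1)/2) =
      (cos (real d * pi * (x+1)/2) + cos (real (1 + m) * pi * (x+1)/2)) / 2"
      by (simp only: cm) simp
    have "cos (pi * (x+1)/2) ^ Suc n * cos (real m * pi * (x+1)/2) =
        cos (pi * (x+1)/2) ^ n * (cos (pi * (x+1)/2) * cos (real m * pi * (x+1)/2))"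
      by (simp add: mult.assoc)
    also have "\<dots> = cos (pi * (x+1)/2) ^ n * ((cos (real d * pi * (x+1)/2) + cos (real (1 + m) * pi * (x+1)/2)) / 2)"
      by (subst E) (rule refl)
    also have "\<dots> = (1/2) * (cos (pi * (x+1)/2) ^ n * cos (real d * pi * (x+1)/2)) +
     (1/2) * (cos (pi * (x+1)/2) ^ n * cos (real (1 + m) * pi * (x+1)/2))"
      by (simp add: algebra_simps)
    finally show ?thesis .
  qed
  have "ipI (\<lambda>x. cos (pi * (x+1)/2) ^ Suc n * cos (real m * pi * (x+1)/2)) f =
    (LINT x:I_int|lborel. ((1/2) * (cos (pi * (x+1)/2) ^ n * cos (real d * pi * (x+1)/2)) +
     (1/2) * (cos (pi * (x+1)/2) ^ n * cos (real (1 + m) * pi * (x+1)/2))) * f x)"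
    unfolding ipI_eq pw ..
  also have "\<dots> = (1/2) * ipI (\<lambda>x. cos (pi * (x+1)/2) ^ n * cos (real d * pi * (x+1)/2)) f +
       (1/2) * ipI (\<lambda>x. cos (pi * (x+1)/2) ^ n * cos (real (1 + m) * pi * (x+1)/2)) f"
    unfolding ipI_eq by (rule fin_set.ip_lin[OF I_fin cpow_L2 cpow_L2 f])
  also have "\<dots> = 0" using Suc.IH[of d] Suc.IH[of "1 + m"] by (simp only:)
  finally show ?case .
qed

lemma poly_orth:
  assumes f: "L2 I_int f" and z: "\<And>i. ipI f (u_fun i) = 0"
  shows "ipI (\<lambda>x. \<Sum>i\<le>n. a i * cos (pi * (x+1)/2) ^ i) f = 0"
proof -
  have L: "L2 I_int (\<lambda>x. cos (pi * (x+1)/2) ^ i)" for i using cpow_L2[of i 0] by simp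
  have Z: "ipI (\<lambda>x. cos (pi * (x+1)/2) ^ i) f = 0" for i using cos_pow_orth[OF f z, of i 0] by simp
  have "ipI (\<lambda>x. \<Sum>i\<le>n. a i * cos (pi * (x+1)/2) ^ i) f =
      (\<Sum>i\<le>n. a i * ipI (\<lambda>x. cos (pi * (x+1)/2) ^ i) f)"
    unfolding ipI_eq by (rule fin_set.ip_sum[OF I_fin]) (auto intro: L f)
  also have "\<dots> = 0" using Z by simp
  finally show ?thesis .
qed


lemma eps_zero:
  fixes x c :: real
  assumes "c \<ge> 0" "\<And>e. e > 0 \<Longrightarrow> \<bar>x\<bar> \<le> e * c"
  shows "x = 0"
proof (rule ccontr)
  assume "x \<noteq> 0"
  then have "\<bar>x\<bar> / (c + 1) > 0" using assms(1) by simp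
  then have "\<bar>x\<bar> \<le> (\<bar>x\<bar> / (c + 1)) * c" by (rule assms(2))
  also have "\<dots> < \<bar>x\<bar>" using \<open>x \<noteq> 0\<close> assms(1) by (simp add: field_simps)
  finally show False by simp
qed

lemma cont_orth:
  assumes f: "L2 I_int f" and z: "\<And>i. ipI f (u_fun i) = 0" and g: "continuous_on UNIV g"
  shows "ipI g f = 0"
proof -
  have "bounded (g ` {-1..1})"
    by (rule compact_imp_bounded, rule compact_continuous_image) (use g continuous_on_subset in auto)
  then obtain B where B0: "\<forall>y\<in>g ` {-1..1}. norm y \<le> B" unfolding bounded_iff by blast
  have B: "\<And>x. x \<in> {-1..1} \<Longrightarrow> \<bar>g x\<bar> \<le> B" using B0 by auto
  have gL: "L2 I_int g" by (rule L2I_cont[OF g, of B]) (use B in \<open>auto simp: I_int_def\<close>)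
  have fint: "set_integrable lborel I_int f" by (rule fin_set.L2_int[OF I_fin f])
  define Lf where "Lf = (LINT x:I_int|lborel. \<bar>f x\<bar>)"
  have Lf0: "Lf \<ge> 0" unfolding Lf_def set_lebesgue_integral_def
    by (intro integral_nonneg_AE) (auto simp: indicator_def)
  show ?thesis
  proof (rule eps_zero[OF Lf0])
    fix e :: real assume e: "e > 0"
    define h where "h y = g (2 * arccos y / pi - 1)" for y
    have hc: "continuous_on {-1..1} h" unfolding h_def
      by (rule continuous_on_compose2[OF g]) (auto intro!: continuous_intros)
    obtain P where P: "real_polynomial_function P" "\<And>y. y \<in> {-1..1} \<Longrightarrow> \<bar>h y - P y\<bar> < e"
      using Stone_Weierstrass_real_polynomial_function[OF compact_Icc hc e] by blast
    obtain a n where Pe: "P = (\<lambda>y. \<Sum>i\<le>n. a i * y^i)" using P(1) real_polynomial_function_iff_sum by blast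
    define Q where "Q x = (\<Sum>i\<le>n. a i * cos (pi * (x+1)/2) ^ i)" for x
    have Q0: "ipI Q f = 0" unfolding Q_def[abs_def] by (rule poly_orth[OF f z])
    have QL: "L2 I_int Q"
    proof (rule L2I_cont)
      show "continuous_on UNIV Q" unfolding Q_def by (auto intro!: continuous_intros)
      fix x show "\<bar>Q x\<bar> \<le> (\<Sum>i\<le>n. \<bar>a i\<bar>)" unfolding Q_def
        by (rule order_trans[OF sum_abs], intro sum_mono) (auto simp: abs_mult power_abs intro!: mult_left_le power_le_one)
    qed
    have close: "\<bar>g x - Q x\<bar> < e" if x: "x \<in> I_int" for x
    proof -
      define y where "y = cos (pi * (x+1)/2)"
      have y: "y \<in> {-1..1}" unfolding y_def by simp
      have "arccos y = pi * (x+1)/2" unfolding y_def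
        by (rule arccos_cos) (use x in \<open>auto simp: I_int_def\<close>)
      then have "2 * arccos y / pi - 1 = x" by (simp add: field_simps)
      then have "h y = g x" unfolding h_def by simp
      moreover have "P y = Q x" unfolding Pe Q_def y_def ..
      ultimately show ?thesis using P(2)[OF y] by simp
    qed
    have "ipI g f = ipI g f - ipI Q f" using Q0 by simp
    also have "\<dots> = (LINT x:I_int|lborel. (1 * g x + (-1) * Q x) * f x)"
      unfolding ipI_eq by (subst fin_set.ip_lin[OF I_fin gL QL f]) simp
    finally have eq: "ipI g f = (LINT x:I_int|lborel. (1 * g x + (-1) * Q x) * f x)" .
    have int1: "set_integrable lborel I_int (\<lambda>x. (1 * g x + (-1) * Q x) * f x)"
      by (rule fin_set.L2_mult_int[OF I_fin fin_set.L2_lin[OF I_fin gL QL] f])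
    have "\<bar>ipI g f\<bar> \<le> (LINT x:I_int|lborel. norm ((1 * g x + (-1) * Q x) * f x))"
      unfolding eq using set_integral_norm_bound[OF int1] by simp
    also have "\<dots> \<le> (LINT x:I_int|lborel. e * \<bar>f x\<bar>)"
    proof (rule set_integral_mono)
      show "set_integrable lborel I_int (\<lambda>x. norm ((1 * g x + - 1 * Q x) * f x))"
        using int1 by (simp add: set_integrable_abs)
      show "set_integrable lborel I_int (\<lambda>x. e * \<bar>f x\<bar>)"
        using fint by (simp add: set_integrable_abs)
      fix x assume "x \<in> I_int"
      then have "\<bar>g x - Q x\<bar> \<le> e" using close by (simp add: less_imp_le)
      then show "norm ((1 * g x + - 1 * Q x) * f x) \<le> e * \<bar>f x\<bar>"
        by (simp add: abs_mult mult_right_mono)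
    qed
    also have "\<dots> = e * Lf" unfolding Lf_def by simp
    finally show "\<bar>ipI g f\<bar> \<le> e * Lf" .
  qed
qed


lemma tail_int_zero:
  assumes f: "L2 I_int f" and z: "\<And>i. ipI f (u_fun i) = 0"
  shows "integral\<^sup>L lborel (\<lambda>x. (indicator I_int x * f x) * indicator {a<..} x) = 0"
proof -
  define F where "F x = indicator I_int x * f x" for x
  have Fi: "integrable lborel F"
    using fin_set.L2_int[OF I_fin f] unfolding set_integrable_def F_def by simp
  have Fm[measurable]: "F \<in> borel_measurable lborel" using Fi by auto
  define g where "g n x = min 1 (max 0 (real n * (x - a)))" for n :: nat and x :: real
  have gc: "continuous_on UNIV (g n)" for n unfolding g_def by (intro continuous_intros)
  define sq where "sq n x = F x * g n x" for n x
  have s0: "integral\<^sup>L lborel (sq n) = 0" for n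
  proof -
    have "ipI (g n) f = 0" by (rule cont_orth[OF f z gc])
    then show ?thesis unfolding ipI_def set_lebesgue_integral_def sq_def F_def by (simp add: ac_simps)
  qed
  have gm: "g n \<in> borel_measurable lborel" for n using borel_measurable_continuous_onI[OF gc] by simp
  have "(\<lambda>n. integral\<^sup>L lborel (sq n)) \<longlonglongrightarrow> integral\<^sup>L lborel (\<lambda>x. F x * indicator {a<..} x)"
  proof (rule integral_dominated_convergence[where w="\<lambda>x. norm (F x)"])
    show "(\<lambda>x. F x * indicator {a<..} x) \<in> borel_measurable lborel" by measurable
    show "sq n \<in> borel_measurable lborel" for n unfolding sq_def using gm[of n] by measurable
    show "integrable lborel (\<lambda>x. norm (F x))" using Fi by simp
    show "AE x in lborel. (\<lambda>n. sq n x) \<longlonglongrightarrow> F x * indicator {a<..} x"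
    proof (rule AE_I2)
      fix x
      show "(\<lambda>n. sq n x) \<longlonglongrightarrow> F x * indicator {a<..} x"
      proof (cases "x \<le> a")
        case True
        then have "g n x = 0" for n unfolding g_def by (simp add: mult_nonneg_nonpos)
        then show ?thesis using True by (simp add: sq_def)
      next
        case False
        then have xa: "x - a > 0" by simp
        obtain N :: nat where N: "real N > 1 / (x - a)" using reals_Archimedean2 by blast
        have "eventually (\<lambda>n. sq n x = F x * indicator {a<..} x) sequentially"
        proof (rule eventually_sequentiallyI[of N])
          fix n assume "N \<le> n"
          then have "real n > 1 / (x - a)" using N by linarith
          then have "real n * (x - a) > 1" using xa by (simp add: field_simps)
          then have "g n x = 1" unfolding g_def by simp
          then show "sq n x = F x * indicator {a<..} x" using False by (simp add: sq_def)
        qed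
        then show ?thesis by (rule tendsto_eventually)
      qed
    qed
    show "AE x in lborel. norm (sq n x) \<le> norm (F x)" for n
    proof (rule AE_I2)
      fix x have "\<bar>g n x\<bar> \<le> 1" unfolding g_def by auto
      then show "norm (sq n x) \<le> norm (F x)" unfolding sq_def
        by (simp add: abs_mult mult_left_le)
    qed
  qed
  then have "(\<lambda>n. 0) \<longlonglongrightarrow> integral\<^sup>L lborel (\<lambda>x. F x * indicator {a<..} x)" using s0 by simp
  then show ?thesis using LIMSEQ_unique[OF _ tendsto_const] unfolding F_def by metis
qed

lemma ennreal_enn2real_eq:
  fixes A B :: ennreal
  assumes "enn2real A = enn2real B" "A < \<infinity>" "B < \<infinity>"
  shows "A = B"
proof -
  have "A = ennreal (enn2real A)" using assms(2) by simp
  also have "\<dots> = ennreal (enn2real B)" using assms(1) by simp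
  also have "\<dots> = B" using assms(3) by simp
  finally show ?thesis .
qed

lemma complete_u:
  assumes f: "L2 I_int f" and z: "\<And>i. ipI f (u_fun i) = 0"
  shows "AE x in lborel. x \<in> I_int \<longrightarrow> f x = 0"
proof -
  define F where "F x = indicator I_int x * f x" for x
  have Fi: "integrable lborel F"
    using fin_set.L2_int[OF I_fin f] unfolding set_integrable_def F_def by simp
  have Fm: "F \<in> borel_measurable lborel" using Fi by auto
  have Fp: "(\<lambda>x. ennreal (F x)) \<in> borel_measurable lborel" using Fm by measurable
  have Fn: "(\<lambda>x. ennreal (- F x)) \<in> borel_measurable lborel" using Fm by measurable
  have fin1: "(\<integral>\<^sup>+x. ennreal (G x) \<partial>lborel) \<noteq> \<infinity>" "(\<integral>\<^sup>+x. ennreal (- G x) \<partial>lborel) \<noteq> \<infinity>"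
    if "integrable lborel G" for G :: "real \<Rightarrow> real"
    using that unfolding real_integrable_def by auto
  have eqm: "density lborel (\<lambda>x. ennreal (F x)) = density lborel (\<lambda>x. ennreal (- F x))"
  proof (rule measure_eqI_lessThan)
    show "sets (density lborel (\<lambda>x. ennreal (F x))) = sets borel" by simp
    show "sets (density lborel (\<lambda>x. ennreal (- F x))) = sets borel" by simp
    fix a :: real
    define G where "G x = F x * indicator {a<..} x" for x
    have Gi: "integrable lborel G"
    proof -
      have "integrable lborel (\<lambda>x. indicator {a<..} x *\<^sub>R F x)" by (rule integrable_mult_indicator) (auto simp: Fi)
      then show ?thesis unfolding G_def by (simp add: ac_simps)
    qed
    have ia: "{a<..} \<in> sets lborel" by simp
    have c1: "ennreal (F x) * indicator {a<..} x = ennreal (G x)" for x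
      unfolding G_def by (cases "x \<in> {a<..}") auto
    have c2: "ennreal (- F x) * indicator {a<..} x = ennreal (- G x)" for x
      unfolding G_def by (cases "x \<in> {a<..}") auto
    have e1: "emeasure (density lborel (\<lambda>x. ennreal (F x))) {a<..} = (\<integral>\<^sup>+x. ennreal (G x) \<partial>lborel)"
      unfolding emeasure_density[OF Fp ia] c1 ..
    have e2: "emeasure (density lborel (\<lambda>x. ennreal (- F x))) {a<..} = (\<integral>\<^sup>+x. ennreal (- G x) \<partial>lborel)"
      unfolding emeasure_density[OF Fn ia] c2 ..
    show "emeasure (density lborel (\<lambda>x. ennreal (F x))) {a<..} < \<infinity>"
      unfolding e1 using fin1(1)[OF Gi] by (simp add: less_top)
    have "integral\<^sup>L lborel G = 0" unfolding G_def F_def by (rule tail_int_zero[OF f z])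
    then have "enn2real (\<integral>\<^sup>+x. ennreal (G x) \<partial>lborel) = enn2real (\<integral>\<^sup>+x. ennreal (- G x) \<partial>lborel)"
      using real_lebesgue_integral_def[OF Gi] by simp
    then have "(\<integral>\<^sup>+x. ennreal (G x) \<partial>lborel) = (\<integral>\<^sup>+x. ennreal (- G x) \<partial>lborel)"
      by (rule ennreal_enn2real_eq) (use fin1[OF Gi] in \<open>simp_all add: less_top\<close>)
    then show "emeasure (density lborel (\<lambda>x. ennreal (F x))) {a<..} = emeasure (density lborel (\<lambda>x. ennreal (- F x))) {a<..}"
      unfolding e1 e2 .
  qed
  have "AE x in lborel. ennreal (F x) = ennreal (- F x)"
    using eqm sigma_finite_measure.density_unique_iff[OF sigma_finite_lborel Fp Fn] by simp
  then show ?thesis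
  proof (rule AE_mp, intro AE_I2 impI)
    fix x assume e: "ennreal (F x) = ennreal (- F x)" and x: "x \<in> I_int"
    have "F x = 0"
    proof (cases "F x \<ge> 0")
      case True
      then have "ennreal (- F x) = 0" by (simp add: ennreal_neg)
      then show ?thesis using e True by simp
    next
      case False
      then have "ennreal (F x) = 0" by (simp add: ennreal_neg)
      then show ?thesis using e False by simp
    qed
    then show "f x = 0" using x by (simp add: F_def)
  qed
qed


lemma fatou_sq:
  fixes h :: "nat \<Rightarrow> real \<Rightarrow> real" and g :: "real \<Rightarrow> real"
  assumes hm: "\<And>k. h k \<in> borel_measurable lborel" and gm: "g \<in> borel_measurable lborel"
    and lim: "AE x in lborel. x \<in> I_int \<longrightarrow> (\<lambda>k. h k x) \<longlonglongrightarrow> g x"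
    and hi: "\<And>k. set_integrable lborel I_int (\<lambda>x. (h k x)\<^sup>2)"
    and hb: "\<And>k. (LINT x:I_int|lborel. (h k x)\<^sup>2) \<le> B"
  shows "set_integrable lborel I_int (\<lambda>x. (g x)\<^sup>2)" and "(LINT x:I_int|lborel. (g x)\<^sup>2) \<le> B"
proof -
  have Is[measurable]: "I_int \<in> sets lborel" by (simp add: I_int_def)
  define G where "G x = indicator I_int x * (g x)\<^sup>2" for x
  define H where "H k x = indicator I_int x * (h k x)\<^sup>2" for k x
  have Gm: "G \<in> borel_measurable lborel" unfolding G_def using gm by measurable
  have Hm: "H k \<in> borel_measurable lborel" for k unfolding H_def using hm[of k] by measurable
  have Hi: "integrable lborel (H k)" for k using hi[of k] by (simp add: set_integrable_def H_def[abs_def])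
  have HI: "integral\<^sup>L lborel (H k) = (LINT x:I_int|lborel. (h k x)\<^sup>2)" for k
    by (simp add: set_lebesgue_integral_def H_def[abs_def])
  have B0: "B \<ge> 0"
  proof -
    have "0 \<le> integral\<^sup>L lborel (H 0)" by (intro integral_nonneg_AE) (auto simp: H_def)
    then show ?thesis using hb[of 0] HI[of 0] by simp
  qed
  have nnH: "(\<integral>\<^sup>+x. ennreal (H k x) \<partial>lborel) \<le> ennreal B" for k
  proof -
    have "(\<integral>\<^sup>+x. ennreal (H k x) \<partial>lborel) = ennreal (integral\<^sup>L lborel (H k))"
      by (rule nn_integral_eq_integral[OF Hi]) (auto simp: H_def)
    also have "\<dots> \<le> ennreal B" using hb[of k] HI[of k] by (simp add: ennreal_leI)
    finally show ?thesis .
  qed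
  have ae: "AE x in lborel. ennreal (G x) = liminf (\<lambda>k. ennreal (H k x))"
    using lim
  proof (rule AE_mp, intro AE_I2 impI)
    fix x assume c: "x \<in> I_int \<longrightarrow> (\<lambda>k. h k x) \<longlonglongrightarrow> g x"
    show "ennreal (G x) = liminf (\<lambda>k. ennreal (H k x))"
    proof (cases "x \<in> I_int")
      case True
      then have "(\<lambda>k. h k x) \<longlonglongrightarrow> g x" using c by simp
      then have "(\<lambda>k. (h k x)\<^sup>2) \<longlonglongrightarrow> (g x)\<^sup>2" by (intro tendsto_intros)
      then have "(\<lambda>k. ennreal (H k x)) \<longlonglongrightarrow> ennreal (G x)" using True
        by (auto simp: H_def G_def intro!: tendsto_ennrealI)
      then show ?thesis by (simp add: lim_imp_Liminf)
    next
      case False then show ?thesis by (simp add: H_def G_def Liminf_const)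
    qed
  qed
  have "(\<integral>\<^sup>+x. ennreal (G x) \<partial>lborel) = (\<integral>\<^sup>+x. liminf (\<lambda>k. ennreal (H k x)) \<partial>lborel)"
    by (rule nn_integral_cong_AE[OF ae])
  also have "\<dots> \<le> liminf (\<lambda>k. \<integral>\<^sup>+x. ennreal (H k x) \<partial>lborel)"
    by (rule nn_integral_liminf) (use Hm in measurable)
  also have "\<dots> \<le> limsup (\<lambda>k. \<integral>\<^sup>+x. ennreal (H k x) \<partial>lborel)" by (rule Liminf_le_Limsup) simp
  also have "\<dots> \<le> ennreal B" by (rule Limsup_bounded) (use nnH in auto)
  finally have nnG: "(\<integral>\<^sup>+x. ennreal (G x) \<partial>lborel) \<le> ennreal B" .
  have Gi: "integrable lborel G"
    by (rule integrableI_nonneg[OF Gm]) (use nnG in \<open>auto simp: G_def top.not_eq_extremum intro: le_less_trans\<close>)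
  then show "set_integrable lborel I_int (\<lambda>x. (g x)\<^sup>2)" by (simp add: set_integrable_def G_def[abs_def])
  have "ennreal (integral\<^sup>L lborel G) = (\<integral>\<^sup>+x. ennreal (G x) \<partial>lborel)"
    by (rule nn_integral_eq_integral[OF Gi, symmetric]) (auto simp: G_def)
  then have "ennreal (integral\<^sup>L lborel G) \<le> ennreal B" using nnG by simp
  then have "integral\<^sup>L lborel G \<le> B" using B0 by (simp add: ennreal_le_iff)
  then show "(LINT x:I_int|lborel. (g x)\<^sup>2) \<le> B" by (simp add: set_lebesgue_integral_def G_def[abs_def])
qed


lemma S_diff: "(m::nat) \<le> n \<Longrightarrow> (\<Sum>i<n. a i) - (\<Sum>i<m. a i) = (\<Sum>i\<in>{m..<n}. (a i :: real))"
  using sum_diff_nat_ivl[of 0 m n a] by (simp add: atLeast0LessThan)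

lemma L2_comb_u: "finite A \<Longrightarrow> L2 I_int (\<lambda>x. \<Sum>i\<in>A. c i * u_fun i x)"
  by (rule fin_set.L2_sum[OF I_fin]) (auto simp: L2_u)

lemma ip_comb_u: "finite A \<Longrightarrow> ipI (\<lambda>x. \<Sum>i\<in>A. c i * u_fun i x) (u_fun k) = (if k \<in> A then c k else 0)"
proof -
  assume A: "finite A"
  have "ipI (\<lambda>x. \<Sum>i\<in>A. c i * u_fun i x) (u_fun k) = (\<Sum>i\<in>A. c i * ipI (u_fun i) (u_fun k))"
    unfolding ipI_eq by (rule fin_set.ip_sum[OF I_fin A]) (auto simp: L2_u)
  also have "\<dots> = (\<Sum>i\<in>A. if i = k then c i else 0)" by (intro sum.cong) (auto simp: ortho_u)
  also have "\<dots> = (if k \<in> A then c k else 0)" using A by (simp add: sum.delta')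
  finally show ?thesis .
qed

lemma sq_int:
  assumes A: "finite A"
  shows "(LINT x:I_int|lborel. (\<Sum>i\<in>A. c i * u_fun i x)\<^sup>2) = (\<Sum>i\<in>A. (c i)\<^sup>2)"
proof -
  let ?T = "\<lambda>x. \<Sum>i\<in>A. c i * u_fun i x"
  have "(LINT x:I_int|lborel. (?T x)\<^sup>2) = (LINT x:I_int|lborel. ?T x * ?T x)" by (simp add: power2_eq_square)
  also have "\<dots> = (\<Sum>i\<in>A. c i * (LINT x:I_int|lborel. u_fun i x * ?T x))"
    by (rule fin_set.ip_sum[OF I_fin A]) (auto simp: L2_u L2_comb_u[OF A])
  also have "\<dots> = (\<Sum>i\<in>A. c i * c i)"
  proof (intro sum.cong refl)
    fix i assume i: "i \<in> A"
    have "(LINT x:I_int|lborel. u_fun i x * ?T x) = ipI ?T (u_fun i)" unfolding ipI_eq by (simp add: ac_simps)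
    also have "\<dots> = c i" using ip_comb_u[OF A] i by simp
    finally show "c i * (LINT x:I_int|lborel. u_fun i x * ?T x) = c i * c i" by simp
  qed
  finally show ?thesis by (simp add: power2_eq_square)
qed

lemma l1_bound:
  assumes g: "L2 I_int g" and d: "d > 0"
  shows "(LINT x:I_int|lborel. \<bar>g x\<bar>) \<le> (LINT x:I_int|lborel. (g x)\<^sup>2) / (2 * d) + d"
proof -
  have gi: "set_integrable lborel I_int (\<lambda>x. (g x)\<^sup>2)" using g by (simp add: L2_def)
  have ci: "set_integrable lborel I_int (\<lambda>x. d / 2)" by (rule fin_set.const_int[OF I_fin])
  have "(LINT x:I_int|lborel. \<bar>g x\<bar>) \<le> (LINT x:I_int|lborel. (g x)\<^sup>2 / (2 * d) + d / 2)"
  proof (rule set_integral_mono)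
    show "set_integrable lborel I_int (\<lambda>x. \<bar>g x\<bar>)"
      using fin_set.L2_int[OF I_fin g] by (rule set_integrable_abs)
    show "set_integrable lborel I_int (\<lambda>x. (g x)\<^sup>2 / (2 * d) + d / 2)"
      using gi ci by (intro set_integral_add(1)) auto
    fix x
    have "0 \<le> (\<bar>g x\<bar> - d)\<^sup>2" by simp
    then have "2 * d * \<bar>g x\<bar> \<le> (g x)\<^sup>2 + d * d" by (simp add: power2_eq_square algebra_simps)
    then show "\<bar>g x\<bar> \<le> (g x)\<^sup>2 / (2 * d) + d / 2" using d by (simp add: field_simps)
  qed
  also have "\<dots> = (LINT x:I_int|lborel. (g x)\<^sup>2) / (2 * d) + (LINT x:I_int|lborel. d / 2)"
    using gi ci by (subst set_integral_add(2)) auto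
  also have "(LINT x:I_int|lborel. d / 2) = d"
    by (subst set_integral_const) (auto simp: I_int_def measure_def)
  finally show ?thesis .
qed

lemma coef_bound:
  assumes g: "L2 I_int g"
  shows "\<bar>ipI g (u_fun i)\<bar> \<le> (LINT x:I_int|lborel. \<bar>g x\<bar>)"
proof -
  have i1: "set_integrable lborel I_int (\<lambda>x. g x * u_fun i x)" by (rule fin_set.L2_mult_int[OF I_fin g L2_u])
  have "\<bar>ipI g (u_fun i)\<bar> \<le> (LINT x:I_int|lborel. norm (g x * u_fun i x))"
    unfolding ipI_eq using set_integral_norm_bound[OF i1] by simp
  also have "\<dots> \<le> (LINT x:I_int|lborel. \<bar>g x\<bar>)"
  proof (rule set_integral_mono)
    show "set_integrable lborel I_int (\<lambda>x. norm (g x * u_fun i x))" using i1 by (simp add: set_integrable_abs)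
    show "set_integrable lborel I_int (\<lambda>x. \<bar>g x\<bar>)" using fin_set.L2_int[OF I_fin g] by (rule set_integrable_abs)
    fix x show "norm (g x * u_fun i x) \<le> \<bar>g x\<bar>"
      using u_bound[of i x] by (simp add: abs_mult mult_left_le)
  qed
  finally show ?thesis .
qed


lemma riesz_fischer:
  assumes cs: "summable (\<lambda>i. (c i)\<^sup>2)"
  shows "\<exists>f. L2 I_int f \<and> (\<forall>i. ipI f (u_fun i) = c i)"
proof -
  define S where "S n x = (\<Sum>i<n. c i * u_fun i x)" for n x
  define C where "C = (\<Sum>i. (c i)\<^sup>2)"
  define tl where "tl n = C - (\<Sum>i<n. (c i)\<^sup>2)" for n
  have tl0: "tl \<longlonglongrightarrow> 0"
  proof -
    have "(\<lambda>n. \<Sum>i<n. (c i)\<^sup>2) \<longlonglongrightarrow> C" unfolding C_def by (rule summable_LIMSEQ[OF cs])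
    then have "(\<lambda>n. C - (\<Sum>i<n. (c i)\<^sup>2)) \<longlonglongrightarrow> C - C" by (intro tendsto_intros)
    then show ?thesis by (simp add: tl_def[abs_def])
  qed
  have blk: "(\<Sum>i\<in>{m..<n}. (c i)\<^sup>2) \<le> tl m" if "m \<le> n" for m n
  proof -
    have "(\<Sum>i<n. (c i)\<^sup>2) \<le> C" unfolding C_def by (rule sum_le_suminf[OF cs]) auto
    then show ?thesis using S_diff[OF that, of "\<lambda>i. (c i)\<^sup>2"] by (simp add: tl_def)
  qed
  have SL: "L2 I_int (S n)" for n unfolding S_def[abs_def] by (rule L2_comb_u) simp
  have Sd: "(\<lambda>x. S n x - S m x) = (\<lambda>x. \<Sum>i\<in>{m..<n}. c i * u_fun i x)" if "m \<le> n" for m n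
    unfolding S_def by (rule ext, rule S_diff[OF that])
  have Sd_int: "(LINT x:I_int|lborel. (S n x - S m x)\<^sup>2) \<le> tl m" if "m \<le> n" for m n
    using sq_int[of "{m..<n}" c] blk[OF that] Sd[OF that] by (simp add: fun_eq_iff)
  have Scont: "continuous_on UNIV (S n)" for n unfolding S_def[abs_def]
    by (intro continuous_intros continuous_on_compose2[OF cont_u]) auto
  have Sm: "S n \<in> borel_measurable lborel" for n using borel_measurable_continuous_onI[OF Scont[of n]] by simp
  have Is[measurable]: "I_int \<in> sets lborel" by (simp add: I_int_def)
  define s where "s n x = indicator I_int x * S n x" for n x
  have si: "integrable lborel (s n)" for n
    using fin_set.L2_int[OF I_fin SL[of n]] by (simp add: set_integrable_def s_def[abs_def])
  have l1s: "(LINT x|lborel. norm (s i x - s j x)) = (LINT x:I_int|lborel. \<bar>S j x - S i x\<bar>)" for i j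
    unfolding set_lebesgue_integral_def s_def by (intro Bochner_Integration.integral_cong) (auto simp: indicator_def)
  obtain r where r: "strict_mono r" "AE x in lborel. Cauchy (\<lambda>k. s (r k) x)"
  proof (rule cauchy_L1_AE_cauchy_subseq[OF si])
    fix e :: real assume e: "e > 0"
    have "eventually (\<lambda>n. tl n < e\<^sup>2 / 2) sequentially"
      using order_tendstoD(2)[OF tl0, of "e\<^sup>2/2"] e by simp
    then obtain N where N: "\<And>n. n \<ge> N \<Longrightarrow> tl n < e\<^sup>2 / 2" unfolding eventually_sequentially by blast
    have "LINT x|lborel. norm (s i x - s j x) < e" if ij: "i \<ge> N" "j \<ge> N" for i j
    proof -
      have gen: "(LINT x:I_int|lborel. \<bar>S n x - S m x\<bar>) < e" if "m \<le> n" "m \<ge> N" for m n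
      proof -
        have L: "L2 I_int (\<lambda>x. 1 * S n x + (-1) * S m x)" by (rule fin_set.L2_lin[OF I_fin SL SL])
        have "(LINT x:I_int|lborel. \<bar>S n x - S m x\<bar>) \<le> (LINT x:I_int|lborel. (S n x - S m x)\<^sup>2) / (2 * (e/2)) + e/2"
          using l1_bound[OF L, of "e/2"] e by simp
        also have "\<dots> \<le> tl m / e + e/2" using Sd_int[OF that(1)] e by (simp add: divide_right_mono)
        also have "\<dots> < (e\<^sup>2/2) / e + e/2"
        proof -
          have "tl m / e < (e\<^sup>2/2) / e" by (rule divide_strict_right_mono) (use N[OF that(2)] e in auto)
          then show ?thesis by simp
        qed
        also have "\<dots> = e" using e by (simp add: power2_eq_square field_simps)
        finally show ?thesis .
      qed
      show ?thesis
      proof (cases "i \<le> j")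
        case True then show ?thesis unfolding l1s using gen[of i j] ij by simp
      next
        case False
        then have "(LINT x:I_int|lborel. \<bar>S i x - S j x\<bar>) < e" using gen[of j i] ij by simp
        then show ?thesis unfolding l1s by (simp add: abs_minus_commute)
      qed
    qed
    then show "\<exists>N. \<forall>i\<ge>N. \<forall>j\<ge>N. LINT x|lborel. norm (s i x - s j x) < e" by blast
  qed
  define f where "f x = lim (\<lambda>k. S (r k) x)" for x
  have fm: "f \<in> borel_measurable lborel" unfolding f_def[abs_def]
    by (rule borel_measurable_lim_metric) (rule Sm)
  have lim: "AE x in lborel. x \<in> I_int \<longrightarrow> (\<lambda>k. S (r k) x) \<longlonglongrightarrow> f x"
    using r(2)
  proof (rule AE_mp, intro AE_I2 impI)
    fix x assume "Cauchy (\<lambda>k. s (r k) x)" and x: "x \<in> I_int"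
    then have "Cauchy (\<lambda>k. S (r k) x)" using x by (simp add: s_def)
    then show "(\<lambda>k. S (r k) x) \<longlonglongrightarrow> f x" unfolding f_def
      by (simp add: Cauchy_convergent_iff convergent_LIMSEQ_iff)
  qed
  have Sq: "set_integrable lborel I_int (\<lambda>x. (S n x)\<^sup>2)" for n using SL[of n] by (simp add: L2_def)
  have fL: "L2 I_int f"
  proof -
    have "set_integrable lborel I_int (\<lambda>x. (f x)\<^sup>2)"
    proof (rule fatou_sq(1)[where h="\<lambda>k. S (r k)" and B=C])
      show "(LINT x:I_int|lborel. (S (r k) x)\<^sup>2) \<le> C" for k
      proof -
        have "(LINT x:I_int|lborel. (S (r k) x)\<^sup>2) = (\<Sum>i<r k. (c i)\<^sup>2)"
          unfolding S_def by (rule sq_int) simp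
        also have "\<dots> \<le> C" unfolding C_def by (rule sum_le_suminf[OF cs]) auto
        finally show ?thesis .
      qed
    qed (use Sm fm lim Sq in auto)
    moreover have "set_borel_measurable lborel I_int f"
      unfolding set_borel_measurable_def using fm by measurable
    ultimately show ?thesis by (simp add: L2_def)
  qed
  have coef: "ipI f (u_fun i) = c i" for i
  proof -
    have bnd: "\<bar>ipI f (u_fun i) - c i\<bar> \<le> e * 1" if e: "e > 0" for e
    proof -
      have "eventually (\<lambda>n. tl n < e\<^sup>2 / 2) sequentially"
        using order_tendstoD(2)[OF tl0, of "e\<^sup>2/2"] e by simp
      then obtain N where N: "\<And>n. n \<ge> N \<Longrightarrow> tl n < e\<^sup>2 / 2" unfolding eventually_sequentially by blast
      define n where "n = max N (Suc i)"
      have n: "n \<ge> N" "i < n" unfolding n_def by auto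
      have g: "L2 I_int (\<lambda>x. 1 * f x + (-1) * S n x)" by (rule fin_set.L2_lin[OF I_fin fL SL])
      have "ipI (\<lambda>x. 1 * f x + (-1) * S n x) (u_fun i) = 1 * ipI f (u_fun i) + (-1) * ipI (S n) (u_fun i)"
        unfolding ipI_eq by (rule fin_set.ip_lin[OF I_fin fL SL L2_u])
      moreover have "ipI (S n) (u_fun i) = c i" using ip_comb_u[of "{..<n}" c i] n unfolding S_def[abs_def] by simp
      ultimately have eq: "ipI f (u_fun i) - c i = ipI (\<lambda>x. 1 * f x + (-1) * S n x) (u_fun i)" by simp
      have tail_f: "(LINT x:I_int|lborel. (f x - S n x)\<^sup>2) \<le> tl n"
      proof (rule fatou_sq(2)[where h="\<lambda>k x. S (r (k + n)) x - S n x"])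
        show "(\<lambda>k x. S (r (k + n)) x - S n x) k \<in> borel_measurable lborel" for k using Sm by measurable
        show "(\<lambda>x. f x - S n x) \<in> borel_measurable lborel" using fm Sm by measurable
        show "AE x in lborel. x \<in> I_int \<longrightarrow> (\<lambda>k. S (r (k + n)) x - S n x) \<longlonglongrightarrow> f x - S n x"
          using lim
        proof (rule AE_mp, intro AE_I2 impI)
          fix x assume "x \<in> I_int \<longrightarrow> (\<lambda>k. S (r k) x) \<longlonglongrightarrow> f x" "x \<in> I_int"
          then have "(\<lambda>k. S (r k) x) \<longlonglongrightarrow> f x" by simp
          then have "(\<lambda>k. S (r (k + n)) x) \<longlonglongrightarrow> f x" by (rule LIMSEQ_ignore_initial_segment)
          then show "(\<lambda>k. S (r (k + n)) x - S n x) \<longlonglongrightarrow> f x - S n x" by (intro tendsto_intros)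
        qed
        show "set_integrable lborel I_int (\<lambda>x. (S (r (k + n)) x - S n x)\<^sup>2)" for k
          using fin_set.L2_lin[OF I_fin SL SL, of 1 "r (k + n)" "-1" n] by (simp add: L2_def)
        show "(LINT x:I_int|lborel. (S (r (k + n)) x - S n x)\<^sup>2) \<le> tl n" for k
        proof -
          have "k + n \<le> r (k + n)" using seq_suble[OF r(1)] by simp
          then show ?thesis using Sd_int[of n "r (k + n)"] by simp
        qed
      qed
      have "\<bar>ipI f (u_fun i) - c i\<bar> \<le> (LINT x:I_int|lborel. \<bar>1 * f x + (-1) * S n x\<bar>)"
        unfolding eq by (rule coef_bound[OF g])
      also have "\<dots> \<le> (LINT x:I_int|lborel. (1 * f x + (-1) * S n x)\<^sup>2) / (2 * (e/2)) + e/2"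
        using l1_bound[OF g, of "e/2"] e by simp
      also have "\<dots> \<le> tl n / e + e/2" using tail_f e by (simp add: divide_right_mono)
      also have "\<dots> \<le> (e\<^sup>2/2) / e + e/2"
      proof -
        have "tl n / e \<le> (e\<^sup>2/2) / e" by (rule divide_right_mono) (use N[OF n(1)] e in auto)
        then show ?thesis by simp
      qed
      also have "\<dots> = e * 1" using e by (simp add: power2_eq_square field_simps)
      finally show ?thesis .
    qed
    have "ipI f (u_fun i) - c i = 0" by (rule eps_zero[of 1]) (use bnd in auto)
    then show ?thesis by simp
  qed
  show ?thesis using fL coef by blast
qed


lemma aco_lin:
  assumes w: "L2O w" and v: "L2O v"
  shows "aco (\<lambda>p. a * w p + b * v p) i j = a * aco w i j + b * aco v i j"
  unfolding aco_def ipO_eq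
  by (rule fin_set.ip_lin[OF Omega_fin]) (use w v L2_w in \<open>auto simp: L2O_eq\<close>)

lemma XsO_L2O: "w \<in> XsO s \<Longrightarrow> L2O w" by (simp add: XsO_def)

lemma XsO_sum: "w \<in> XsO s \<Longrightarrow> (\<lambda>(i,j). (1 - lamO i j) powr (2 * s) * (aco w i j)\<^sup>2) summable_on UNIV"
  by (simp add: XsO_def aco_def)

lemma XsO_lin:
  assumes w: "w \<in> XsO s" and v: "v \<in> XsO s"
  shows "(\<lambda>p. a * w p + b * v p) \<in> XsO s"
proof -
  have L: "L2O (\<lambda>p. a * w p + b * v p)"
    using fin_set.L2_lin[OF Omega_fin, of w v a b] w v by (simp add: XsO_def L2O_eq)
  have sw: "(\<lambda>q. 2 * a\<^sup>2 * (\<lambda>(i,j). (1 - lamO i j) powr (2 * s) * (aco w i j)\<^sup>2) q) summable_on UNIV"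
    by (rule summable_on_cmult_right[OF XsO_sum[OF w]])
  have sv: "(\<lambda>q. 2 * b\<^sup>2 * (\<lambda>(i,j). (1 - lamO i j) powr (2 * s) * (aco v i j)\<^sup>2) q) summable_on UNIV"
    by (rule summable_on_cmult_right[OF XsO_sum[OF v]])
  have "(\<lambda>(i,j). (1 - lamO i j) powr (2 * s) * (aco (\<lambda>p. a * w p + b * v p) i j)\<^sup>2) summable_on UNIV"
  proof (rule summable_on_comparison_test[OF summable_on_add[OF sw sv]])
    fix q :: "nat \<times> nat"
    obtain i j where q: "q = (i,j)" by (cases q)
    have e: "aco (\<lambda>p. a * w p + b * v p) i j = a * aco w i j + b * aco v i j"
      by (rule aco_lin[OF XsO_L2O[OF w] XsO_L2O[OF v]])
    have "(a * aco w i j + b * aco v i j)\<^sup>2 \<le> 2 * a\<^sup>2 * (aco w i j)\<^sup>2 + 2 * b\<^sup>2 * (aco v i j)\<^sup>2"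
    proof -
      have "0 \<le> (a * aco w i j - b * aco v i j)\<^sup>2" by simp
      then show ?thesis by (simp add: power2_eq_square algebra_simps)
    qed
    then have "(1 - lamO i j) powr (2 * s) * (a * aco w i j + b * aco v i j)\<^sup>2 \<le>
       (1 - lamO i j) powr (2 * s) * (2 * a\<^sup>2 * (aco w i j)\<^sup>2 + 2 * b\<^sup>2 * (aco v i j)\<^sup>2)"
      by (rule mult_left_mono) simp
    then show "(\<lambda>(i,j). (1 - lamO i j) powr (2 * s) * (aco (\<lambda>p. a * w p + b * v p) i j)\<^sup>2) q \<le>
        2 * a\<^sup>2 * (\<lambda>(i,j). (1 - lamO i j) powr (2 * s) * (aco w i j)\<^sup>2) q +
        2 * b\<^sup>2 * (\<lambda>(i,j). (1 - lamO i j) powr (2 * s) * (aco v i j)\<^sup>2) q"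
      using e by (simp add: q algebra_simps)
    show "0 \<le> (\<lambda>(i,j). (1 - lamO i j) powr (2 * s) * (aco (\<lambda>p. a * w p + b * v p) i j)\<^sup>2) q"
      by (simp add: q)
  qed
  then show ?thesis using L by (simp add: XsO_def aco_def)
qed

lemma bco_summable:
  assumes s: "s > 1/4" and w: "w \<in> XsO s"
  shows "summable (\<lambda>j. aco w i j * c2 j)" and "(\<lambda>j. aco w i j * c2 j) sums bco w i"
proof -
  show "summable (\<lambda>j. aco w i j * c2 j)" using key(1)[OF s w] by (rule summable_rabs_cancel)
  then show "(\<lambda>j. aco w i j * c2 j) sums bco w i" unfolding bco_def by (rule summable_sums)
qed

lemma bco_lin:
  assumes s: "s > 1/4" and w: "w \<in> XsO s" and v: "v \<in> XsO s"
  shows "bco (\<lambda>p. a * w p + b * v p) i = a * bco w i + b * bco v i"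
proof -
  have "(\<lambda>j. a * (aco w i j * c2 j) + b * (aco v i j * c2 j)) sums (a * bco w i + b * bco v i)"
    by (intro sums_add sums_mult bco_summable[OF s w] bco_summable[OF s v])
  moreover have "(\<lambda>j. aco (\<lambda>p. a * w p + b * v p) i j * c2 j) = (\<lambda>j. a * (aco w i j * c2 j) + b * (aco v i j * c2 j))"
    by (rule ext) (simp add: aco_lin[OF XsO_L2O[OF w] XsO_L2O[OF v]] algebra_simps)
  ultimately show ?thesis unfolding bco_def by (simp add: sums_iff)
qed

lemma nu_ge1: "s \<ge> 0 \<Longrightarrow> (1 - lamI i) powr (2 * s) \<ge> 1"
  using lamI_ge[of i] by (intro ge_one_powr_ge_zero) auto

lemma coef_le_normI:
  assumes g: "g \<in> XsI s" and s: "s \<ge> 0"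
  shows "\<bar>ipI g (u_fun i)\<bar> \<le> normI s g"
proof -
  have sm: "summable (\<lambda>i. (1 - lamI i) powr (2 * s) * (ipI g (u_fun i))\<^sup>2)" using g by (simp add: XsI_def)
  have "(ipI g (u_fun i))\<^sup>2 \<le> (1 - lamI i) powr (2 * s) * (ipI g (u_fun i))\<^sup>2"
    using nu_ge1[OF s, of i] by (simp add: mult_le_cancel_right1)
  also have "\<dots> = (\<Sum>k\<in>{i}. (1 - lamI k) powr (2 * s) * (ipI g (u_fun k))\<^sup>2)" by simp
  also have "\<dots> \<le> (\<Sum>k. (1 - lamI k) powr (2 * s) * (ipI g (u_fun k))\<^sup>2)"
    by (rule sum_le_suminf[OF sm]) auto
  finally have "sqrt ((ipI g (u_fun i))\<^sup>2) \<le> sqrt (\<Sum>k. (1 - lamI k) powr (2 * s) * (ipI g (u_fun k))\<^sup>2)"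
    by (rule real_sqrt_le_mono)
  then show ?thesis unfolding normI_def by simp
qed


lemma box_filterlim:
  "filterlim (\<lambda>N::nat. {..<N} \<times> {..<N}) (finite_subsets_at_top (UNIV :: (nat \<times> nat) set)) sequentially"
  unfolding filterlim_finite_subsets_at_top
proof (intro allI impI)
  fix X :: "(nat \<times> nat) set" assume X: "finite X \<and> X \<subseteq> UNIV"
  then have "finite (fst ` X \<union> snd ` X)" by simp
  then obtain M where M: "fst ` X \<union> snd ` X \<subseteq> {..<M}" using finite_nat_bounded by blast
  show "eventually (\<lambda>N. finite ({..<N} \<times> {..<N}) \<and> X \<subseteq> {..<N} \<times> {..<N} \<and> {..<N} \<times> {..<N} \<subseteq> UNIV) sequentially"
  proof (rule eventually_sequentiallyI[of M])
    fix N assume "M \<le> N"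
    then have "X \<subseteq> {..<N} \<times> {..<N}" using M by force
    then show "finite ({..<N} \<times> {..<N}) \<and> X \<subseteq> {..<N} \<times> {..<N} \<and> {..<N} \<times> {..<N} \<subseteq> UNIV" by simp
  qed
qed

lemma normO_aco: "normO s f = sqrt (\<Sum>\<^sub>\<infinity>(i,j)\<in>UNIV. (1 - lamO i j) powr (2 * s) * (aco f i j)\<^sup>2)"
  by (simp add: normO_def aco_def)

lemma trunc_norm:
  assumes w: "w \<in> XsO s"
  shows "(\<lambda>N. normO s (\<lambda>p. 1 * w p + (-1) * (\<Sum>(i,j)\<in>{..<N}\<times>{..<N}. aco w i j * w_fun i j p))) \<longlonglongrightarrow> 0"
proof -
  define G where "G = (\<lambda>(i,j). (1 - lamO i j) powr (2 * s) * (aco w i j)\<^sup>2)"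
  define S where "S = infsum G UNIV"
  have GS: "(G has_sum S) UNIV" unfolding S_def G_def using XsO_sum[OF w] by (rule has_sum_infsum)
  define B where "B N = {..<N} \<times> {..<(N::nat)}" for N
  have Bf: "finite (B N)" for N by (simp add: B_def)
  have eqn: "normO s (\<lambda>p. 1 * w p + (-1) * (\<Sum>(i,j)\<in>B N. aco w i j * w_fun i j p)) = sqrt (S - sum G (B N))" for N
  proof -
    let ?wN = "\<lambda>p. \<Sum>(i,j)\<in>B N. aco w i j * w_fun i j p"
    have ac: "aco (\<lambda>p. 1 * w p + (-1) * ?wN p) k l = aco w k l - (if (k,l) \<in> B N then aco w k l else 0)" for k l
      using aco_lin[OF XsO_L2O[OF w], of ?wN 1 "-1" k l] comb_L2[OF Bf[of N], of "aco w"] comb_aco[OF Bf[of N], of "aco w" k l]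
      by (simp add: L2O_eq)
    have fe: "(\<lambda>(k,l). (1 - lamO k l) powr (2 * s) * (aco (\<lambda>p. 1 * w p + (-1) * ?wN p) k l)\<^sup>2) =
        (\<lambda>q. G q + - (if q \<in> B N then G q else 0))"
    proof (rule ext)
      fix q :: "nat \<times> nat"
      obtain k l where q: "q = (k,l)" by (cases q)
      show "(\<lambda>(k,l). (1 - lamO k l) powr (2 * s) * (aco (\<lambda>p. 1 * w p + (-1) * ?wN p) k l)\<^sup>2) q =
          G q + - (if q \<in> B N then G q else 0)"
        unfolding q case_prod_conv ac by (cases "(k,l) \<in> B N") (simp_all add: G_def)
    qed
    have h1: "((\<lambda>q. if q \<in> B N then G q else 0) has_sum sum G (B N)) UNIV"
    proof -
      have "(G has_sum sum G (B N)) (B N)" using Bf by simp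
      then show ?thesis by (rule has_sum_cong_neutral[THEN iffD2, rotated -1]) auto
    qed
    have "((\<lambda>q. G q + - (if q \<in> B N then G q else 0)) has_sum (S + - sum G (B N))) UNIV"
    proof -
      have h2: "((\<lambda>q. - (if q \<in> B N then G q else 0)) has_sum (- sum G (B N))) UNIV"
        using has_sum_uminus[where f="\<lambda>q. if q \<in> B N then G q else 0" and a="- sum G (B N)" and A=UNIV] h1 by simp
      show ?thesis by (rule has_sum_add[OF GS h2])
    qed
    then have "(\<Sum>\<^sub>\<infinity>(k,l)\<in>UNIV. (1 - lamO k l) powr (2 * s) * (aco (\<lambda>p. 1 * w p + (-1) * ?wN p) k l)\<^sup>2) = S - sum G (B N)"
      unfolding fe by (simp add: infsumI)
    then show ?thesis unfolding normO_aco by simp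
  qed
  have "(\<lambda>N. sum G (B N)) \<longlonglongrightarrow> S"
    using GS unfolding has_sum_def B_def by (rule filterlim_compose[OF _ box_filterlim])
  then have "(\<lambda>N. sqrt (S - sum G (B N))) \<longlonglongrightarrow> sqrt (S - S)" by (intro tendsto_intros)
  then show ?thesis using eqn by (simp add: B_def)
qed


lemma normO_nonneg: "normO s w \<ge> 0" unfolding normO_def by (rule real_sqrt_ge_zero, rule infsum_nonneg) auto

lemma Kc_pos: "s > 1/4 \<Longrightarrow> Kc s > 0"
proof -
  assume s: "s > 1/4"
  have "1/(4 * s - 1) > 0" using s by simp
  then show ?thesis unfolding Kc_def by (intro mult_pos_pos add_pos_pos) auto
qed

lemma NB:
  assumes s: "s > 1/4" and w: "w \<in> XsO s" and g: "L2 I_int g" and gc: "\<And>i. ipI g (u_fun i) = bco w i"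
  shows "g \<in> XsI (s - 1/4)" and "normI (s - 1/4) g \<le> sqrt (Kc s) * normO s w"
proof -
  show "g \<in> XsI (s - 1/4)" using g key(2)[OF s w] by (simp add: XsI_def L2I_eq gc)
  have "normI (s - 1/4) g = sqrt (\<Sum>i. (1 - lamI i) powr (2 * (s - 1/4)) * (bco w i)\<^sup>2)"
    by (simp add: normI_def gc)
  also have "\<dots> \<le> sqrt (Kc s * (normO s w)\<^sup>2)" by (rule real_sqrt_le_mono[OF key(3)[OF s w]])
  also have "\<dots> = sqrt (Kc s) * normO s w" using normO_nonneg[of s w] by (simp add: real_sqrt_mult)
  finally show "normI (s - 1/4) g \<le> sqrt (Kc s) * normO s w" .
qed

lemma EQ:
  assumes g1: "L2 I_int g1" and g2: "L2 I_int g2" and c: "\<And>i. ipI g1 (u_fun i) = ipI g2 (u_fun i)"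
  shows "AE x in lborel. x \<in> I_int \<longrightarrow> g1 x = g2 x"
proof -
  have L: "L2 I_int (\<lambda>x. 1 * g1 x + (-1) * g2 x)" by (rule fin_set.L2_lin[OF I_fin g1 g2])
  have "ipI (\<lambda>x. 1 * g1 x + (-1) * g2 x) (u_fun i) = 1 * ipI g1 (u_fun i) + (-1) * ipI g2 (u_fun i)" for i
    unfolding ipI_eq by (rule fin_set.ip_lin[OF I_fin g1 g2 L2_u])
  then have "ipI (\<lambda>x. 1 * g1 x + (-1) * g2 x) (u_fun i) = 0" for i using c by simp
  then have "AE x in lborel. x \<in> I_int \<longrightarrow> 1 * g1 x + (-1) * g2 x = 0" by (rule complete_u[OF L])
  then show ?thesis by (rule AE_mp) (intro AE_I2, simp)
qed

lemma TT_ex: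
  assumes s: "s > 1/4" and w: "w \<in> XsO s"
  shows "\<exists>f. L2 I_int f \<and> (\<forall>i. ipI f (u_fun i) = bco w i)"
proof (rule riesz_fischer)
  show "summable (\<lambda>i. (bco w i)\<^sup>2)"
  proof (rule summable_comparison_test'[OF key(2)[OF s w]])
    fix n
    have "(bco w n)\<^sup>2 \<le> (1 - lamI n) powr (2 * (s - 1/4)) * (bco w n)\<^sup>2"
      using nu_ge1[of "s - 1/4" n] s by (simp add: mult_le_cancel_right1)
    then show "norm ((bco w n)\<^sup>2) \<le> (1 - lamI n) powr (2 * (s - 1/4)) * (bco w n)\<^sup>2" by simp
  qed
qed


lemma finite_comb_XsO: "finite_comb w \<Longrightarrow> w \<in> XsO s"
  unfolding finite_comb_def using comb_XsO by blast

lemma Tr_props: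
  assumes "finite_comb w"
  shows "L2 I_int (Tr w)" "\<And>i. ipI (Tr w) (u_fun i) = bco w i"
  using assms unfolding finite_comb_def using Tr_L2 Tr_coef by auto

lemma trunc_coef:
  assumes s: "s > 1/4" and w: "w \<in> XsO s" and iN: "i < N"
  shows "ipI (Tr (\<lambda>p. \<Sum>(i,j)\<in>{..<N}\<times>{..<N}. aco w i j * w_fun i j p)) (u_fun i) = (\<Sum>j<N. aco w i j * c2 j)"
proof -
  have fin: "finite ({..<N}\<times>{..<N})" by simp
  have "ipI (Tr (\<lambda>p. \<Sum>(i,j)\<in>{..<N}\<times>{..<N}. aco w i j * w_fun i j p)) (u_fun i) =
      bco (\<lambda>p. \<Sum>(i,j)\<in>{..<N}\<times>{..<N}. aco w i j * w_fun i j p) i" by (rule Tr_coef[OF fin])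
  also have "\<dots> = (\<Sum>j. (if (i,j) \<in> {..<N}\<times>{..<N} then aco w i j else 0) * c2 j)"
    unfolding bco_def comb_aco[OF fin] ..
  also have "\<dots> = (\<Sum>j<N. (if (i,j) \<in> {..<N}\<times>{..<N} then aco w i j else 0) * c2 j)"
    by (rule suminf_finite) auto
  also have "\<dots> = (\<Sum>j<N. aco w i j * c2 j)" using iN by (intro sum.cong) auto
  finally show ?thesis .
qed

lemma uniq_coef:
  assumes s: "s > 1/4" and T': "trace_ext s T'" and w: "w \<in> XsO s"
  shows "ipI (T' w) (u_fun i) = bco w i"
proof -
  note TE = T'[unfolded trace_ext_def]
  have X': "\<And>w. w \<in> XsO s \<Longrightarrow> T' w \<in> XsI (s - 1/4)" using conjunct1[OF TE] by (rule bspec)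
  have lin': "\<And>w v a b. w \<in> XsO s \<Longrightarrow> v \<in> XsO s \<Longrightarrow>
        AE x in lborel. x \<in> I_int \<longrightarrow> T' (\<lambda>p. a * w p + b * v p) x = a * T' w x + b * T' v x"
    using conjunct1[OF conjunct2[OF TE]] by simp
  have agr: "\<And>w. finite_comb w \<Longrightarrow> AE x in lborel. x \<in> I_int \<longrightarrow> T' w x = Tr w x"
    using conjunct2[OF conjunct2[OF conjunct2[OF TE]]] by simp
  from conjunct1[OF conjunct2[OF conjunct2[OF TE]]] obtain C' where
    C0: "\<forall>w\<in>XsO s. normI (s - 1/4) (T' w) \<le> C' * normO s w" by (elim exE)
  have C': "\<And>w. w \<in> XsO s \<Longrightarrow> normI (s - 1/4) (T' w) \<le> C' * normO s w" using C0 by (rule bspec)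
  have s0: "s - 1/4 \<ge> 0" using s by simp
  have XL: "\<And>w. w \<in> XsO s \<Longrightarrow> L2 I_int (T' w)" using X' by (simp add: XsI_def L2I_eq)
  define wN where "wN N = (\<lambda>p. \<Sum>(i,j)\<in>{..<N}\<times>{..<N}. aco w i j * w_fun i j p)" for N
  define dN where "dN N = (\<lambda>p. 1 * w p + (-1) * wN N p)" for N
  define P where "P N = (\<Sum>j<N. aco w i j * c2 j)" for N
  have fcN: "finite_comb (wN N)" for N unfolding finite_comb_def wN_def
    by (rule exI[of _ "{..<N}\<times>{..<N}"], rule exI[of _ "aco w"]) simp
  have wNX: "wN N \<in> XsO s" for N using finite_comb_XsO[OF fcN] .
  have dNX: "dN N \<in> XsO s" for N unfolding dN_def by (rule XsO_lin[OF w wNX])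
  have bnd: "\<bar>ipI (T' w) (u_fun i) - P N\<bar> \<le> \<bar>C'\<bar> * normO s (dN N)" if iN: "i < N" for N
  proof -
    have ae: "AE x in lborel. x \<in> I_int \<longrightarrow> T' (dN N) x = 1 * T' w x + (-1) * Tr (wN N) x"
      using lin'[OF w wNX[of N], of 1 "-1"] agr[OF fcN[of N]] unfolding dN_def by eventually_elim auto
    have L1: "L2 I_int (T' (dN N))" by (rule XL[OF dNX])
    have L2': "L2 I_int (\<lambda>x. 1 * T' w x + (-1) * Tr (wN N) x)"
      by (rule fin_set.L2_lin[OF I_fin XL[OF w] Tr_props(1)[OF fcN]])
    have "ipI (T' (dN N)) (u_fun i) = ipI (\<lambda>x. 1 * T' w x + (-1) * Tr (wN N) x) (u_fun i)"
      unfolding ipI_eq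
      by (rule fin_set.ip_cong_AE[OF I_fin fin_set.L2_meas[OF I_fin L1] fin_set.L2_meas[OF I_fin L2']
            fin_set.L2_meas[OF I_fin L2_u] ae])
    also have "\<dots> = 1 * ipI (T' w) (u_fun i) + (-1) * ipI (Tr (wN N)) (u_fun i)"
      unfolding ipI_eq by (rule fin_set.ip_lin[OF I_fin XL[OF w] Tr_props(1)[OF fcN] L2_u])
    also have "ipI (Tr (wN N)) (u_fun i) = P N" unfolding wN_def P_def by (rule trunc_coef[OF s w iN])
    finally have eq: "ipI (T' (dN N)) (u_fun i) = ipI (T' w) (u_fun i) - P N" by simp
    have "\<bar>ipI (T' (dN N)) (u_fun i)\<bar> \<le> normI (s - 1/4) (T' (dN N))" by (rule coef_le_normI[OF X'[OF dNX] s0])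
    also have "\<dots> \<le> C' * normO s (dN N)" by (rule C'[OF dNX])
    also have "\<dots> \<le> \<bar>C'\<bar> * normO s (dN N)" using normO_nonneg[of s "dN N"] by (simp add: mult_right_mono)
    finally show ?thesis using eq by simp
  qed
  have nz: "(\<lambda>N. normO s (dN N)) \<longlonglongrightarrow> 0" unfolding dN_def wN_def by (rule trunc_norm[OF w])
  have "(\<lambda>N. ipI (T' w) (u_fun i) - P N) \<longlonglongrightarrow> 0"
  proof (rule Lim_null_comparison)
    show "eventually (\<lambda>N. norm (ipI (T' w) (u_fun i) - P N) \<le> \<bar>C'\<bar> * normO s (dN N)) sequentially"
      using bnd by (intro eventually_sequentiallyI[of "Suc i"]) auto
    show "(\<lambda>N. \<bar>C'\<bar> * normO s (dN N)) \<longlonglongrightarrow> 0" using tendsto_mult_right_zero[OF nz] by simp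
  qed
  then have "(\<lambda>N. ipI (T' w) (u_fun i) - (ipI (T' w) (u_fun i) - P N)) \<longlonglongrightarrow> ipI (T' w) (u_fun i) - 0"
    by (intro tendsto_intros)
  then have "P \<longlonglongrightarrow> ipI (T' w) (u_fun i)" by simp
  moreover have "P \<longlonglongrightarrow> bco w i" unfolding P_def[abs_def] bco_def
    by (rule summable_LIMSEQ[OF bco_summable(1)[OF s w]])
  ultimately show ?thesis by (rule LIMSEQ_unique)
qed


theorem lemma12:
  fixes s :: real
  assumes "s > 1/4"
  shows "(\<exists>C. \<forall>w. finite_comb w \<longrightarrow>
            Tr w \<in> XsI (s - 1/4) \<and> normI (s - 1/4) (Tr w) \<le> C * normO s w)
       \<and> (\<exists>T. trace_ext s T \<and>
            (\<forall>T'. trace_ext s T' \<longrightarrow>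
               (\<forall>w\<in>XsO s. AE x in lborel. x \<in> I_int \<longrightarrow> T' w x = T w x)))"
proof
  have s: "s > 1/4" by fact
  show "\<exists>C. \<forall>w. finite_comb w \<longrightarrow> Tr w \<in> XsI (s - 1/4) \<and> normI (s - 1/4) (Tr w) \<le> C * normO s w"
  proof (intro exI allI impI conjI)
    fix w assume fc: "finite_comb w"
    show "Tr w \<in> XsI (s - 1/4)" by (rule NB(1)[OF s finite_comb_XsO[OF fc] Tr_props[OF fc]])
    show "normI (s - 1/4) (Tr w) \<le> sqrt (Kc s) * normO s w" by (rule NB(2)[OF s finite_comb_XsO[OF fc] Tr_props[OF fc]])
  qed
  define T where "T w = (SOME f. L2 I_int f \<and> (\<forall>i. ipI f (u_fun i) = bco w i))" for w
  have TT: "L2 I_int (T w) \<and> (\<forall>i. ipI (T w) (u_fun i) = bco w i)" if w: "w \<in> XsO s" for w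
    unfolding T_def by (rule someI_ex[OF TT_ex[OF s w]])
  have ext: "trace_ext s T"
    unfolding trace_ext_def
  proof (intro conjI ballI allI impI)
    fix w assume w: "w \<in> XsO s"
    show "T w \<in> XsI (s - 1/4)" using NB(1)[OF s w] TT[OF w] by blast
  next
    fix w v a b assume w: "w \<in> XsO s" and v: "v \<in> XsO s"
    have z: "(\<lambda>p. a * w p + b * v p) \<in> XsO s" by (rule XsO_lin[OF w v])
    show "AE x in lborel. x \<in> I_int \<longrightarrow> T (\<lambda>p. a * w p + b * v p) x = a * T w x + b * T v x"
    proof (rule EQ)
      show "L2 I_int (T (\<lambda>p. a * w p + b * v p))" using TT[OF z] by blast
      show "L2 I_int (\<lambda>x. a * T w x + b * T v x)" using TT[OF w] TT[OF v] by (intro fin_set.L2_lin[OF I_fin]) auto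
      fix i
      have "ipI (\<lambda>x. a * T w x + b * T v x) (u_fun i) = a * ipI (T w) (u_fun i) + b * ipI (T v) (u_fun i)"
        unfolding ipI_eq using TT[OF w] TT[OF v] by (intro fin_set.ip_lin[OF I_fin] L2_u) auto
      also have "\<dots> = bco (\<lambda>p. a * w p + b * v p) i" using TT[OF w] TT[OF v] bco_lin[OF s w v] by simp
      finally show "ipI (T (\<lambda>p. a * w p + b * v p)) (u_fun i) = ipI (\<lambda>x. a * T w x + b * T v x) (u_fun i)"
        using TT[OF z] by simp
    qed
  next
    show "\<exists>C. \<forall>w\<in>XsO s. normI (s - 1/4) (T w) \<le> C * normO s w"
      using NB(2)[OF s] TT by blast
  next
    fix w assume fc: "finite_comb w"
    have w: "w \<in> XsO s" by (rule finite_comb_XsO[OF fc])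
    show "AE x in lborel. x \<in> I_int \<longrightarrow> T w x = Tr w x"
      by (rule EQ) (use TT[OF w] Tr_props[OF fc] in auto)
  qed
  show "\<exists>T. trace_ext s T \<and> (\<forall>T'. trace_ext s T' \<longrightarrow> (\<forall>w\<in>XsO s. AE x in lborel. x \<in> I_int \<longrightarrow> T' w x = T w x))"
  proof (intro exI conjI allI impI ballI)
    show "trace_ext s T" by (rule ext)
    fix T' w assume T': "trace_ext s T'" and w: "w \<in> XsO s"
    have L': "L2 I_int (T' w)" using T' w unfolding trace_ext_def by (auto simp: XsI_def L2I_eq)
    show "AE x in lborel. x \<in> I_int \<longrightarrow> T' w x = T w x"
      by (rule EQ[OF L']) (use TT[OF w] uniq_coef[OF s T' w] in auto)
  qed
qed


end
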